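(* Assume the existence of $h$ and conditions (i)–(v) below. Let $\overleftarrow F:\mathcal M\to\mathcal V$ map $\mu\in\mathcal M$ to the unique regular solution $v$ of $\partial_tv^i(t,u)=-\hat\psi^i(t,u,\mu(t,u),v(t,u))-\sum_j\hat Q^{ij}(t,u,\mu(t,u),v(t,u))v^j(t,u)-\mathbb I_{\{Z(u)<n\}}\lambda^{Z(u)+1}(t,\mu(t,u))\big(v^{J^i(t)}(t,\overrightarrow{(u,t)})-v^i(t,u)\big)$, $v(T,u)=\Psi(Z(u),\mu(T,u))$ (this solution exists, is unique and lies in $\mathcal V$). Then, with respect to the uniform norms $\|f\|=\sup_{(t,u)\in\mathrm{TS}}\|f(t,u)\|$, $\overleftarrow F$ is Lipschitz continuous with Lipschitz constant $$(L_\Psi+K_1T)\,e^{K_2T}\sum_{i=0}^n\big(e^{K_2T}\lambda_{\max}T\big)^i.$$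
   Context: $\mathbb S=\{1,\dots,S\}$, $\mathbb A\subseteq\mathbb R^A$, $n\in\mathbb N$, $T>0$; $\mathcal P(\mathbb S)$ the simplex. Bounded Borel $\lambda=(\lambda^1,\dots,\lambda^n):[0,T]\times\mathcal P(\mathbb S)\to(0,\infty)^n$, $Q:[0,T]\times\{0,..,n\}\times\mathcal P(\mathbb S)\times\mathbb A\to\mathbb R^{S\times S}$ (intensity matrices), $\psi$ (same domain, $\mathbb R^S$-valued), $\Psi:\{0,..,n\}\times\mathcal P(\mathbb S)\to\mathbb R^S$, $J:[0,T]\times\mathcal P(\mathbb S)\to\mathbb S^{\mathbb S}$. $\mathbb U$: $u\in(\{-1\}\cup[0,T])^n$ with $0\le u^1\le\dots\le u^k$, $u^{k+1}=\dots=u^n=-1$ for some $k\in\{0,..,n\}$; $Z(u)=k$. $\mathrm{TS}=\{(t,u):\max_ku^k\le t\le T\}$; regular = absolutely continuous in $t$ for each $u$; $\overrightarrow{(u,t)}$ = $u$ with entry $Z(u)+1$ set to $t$. $h$ Borel with $h^i(t,u,m,v)\in\operatorname{argmax}_a\{\psi^i(t,Z(u),m,a)+\sum_jQ^{ij}(t,Z(u),m,a)v^j\}$; $\hat Q^{ij}(t,u,m,v)=Q^{ij}(t,Z(u),m,h^i(t,u,m,v))$, $\hat\psi^i(t,u,m,v)=\psi^i(t,Z(u),m,h^i(t,u,m,v))$. Norms: max norm on $\mathbb R^S$ and a compatible matrix norm. Conditions: (i) $\|\hat\psi(t,u,m_1,v_1)-\hat\psi(t,u,m_2,v_2)\|\le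 L_{\hat\psi}(\|m_1-m_2\|+\|v_1-v_2\|)$; (ii) same for $\hat Q$ with $L_{\hat Q}$; (iii) $\|\Psi(k,m_1)-\Psi(k,m_2)\|\le L_\Psi\|m_1-m_2\|$; (iv) $|\lambda^k(t,m_1)-\lambda^k(t,m_2)|\le L_\lambda\|m_1-m_2\|$; (v) $J^i(t,m)$ independent of $m$ (written $J^i(t)$). Constants: $Q_{\max}=\sup\|Q\|$, $\psi_{\max}=\sup\|\psi\|$, $\Psi_{\max}=\sup\|\Psi\|$, $\lambda_{\max}=\sup\lambda^k$, $v_{\max}=(\Psi_{\max}+\psi_{\max}T)e^{(Q_{\max}+\lambda_{\max})T}\sum_{i=0}^n(e^{(Q_{\max}+\lambda_{\max})T}\lambda_{\max}T)^i$, $K_1=L_{\hat\psi}+L_{\hat Q}v_{\max}+2v_{\max}L_\lambda$, $K_2=L_{\hat\psi}+v_{\max}L_{\hat Q}+Q_{\max}+\lambda_{\max}$. $\mathcal M$: functions $\mathrm{TS}\to\mathcal P(\mathbb S)$ that are $Q_{\max}$-Lipschitz in $t$. $\mathcal V$: functions $\mathrm{TS}\to\mathbb R^S$ absolutely continuous in $t$ with $\sup\|v\|\le v_{\max}$. *)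

theory Defs
  imports "HOL-Analysis.Analysis"
begin

text \<open>States: a finite type 's (playing the role of {1,...,S}).
  Vectors in R^S are functions 's => real, matrices are 's => 's => real.\<close>

definition maxnorm :: "('s::finite \<Rightarrow> real) \<Rightarrow> real" where
  "maxnorm x = Max (range (\<lambda>i. \<bar>x i\<bar>))"

text \<open>Matrix norm compatible with (induced by) the max norm: maximal absolute row sum.\<close>
definition matnorm :: "('s::finite \<Rightarrow> 's \<Rightarrow> real) \<Rightarrow> real" where
  "matnorm M = Max (range (\<lambda>i. \<Sum>j\<in>UNIV. \<bar>M i j\<bar>))"

definition prob_simplex :: "('s::finite \<Rightarrow> real) set" where
  "prob_simplex = {m. (\<forall>i. 0 \<le> m i) \<and> (\<Sum>i\<in>UNIV. m i) = 1}"

definition intensity_matrix :: "('s::finite \<Rightarrow> 's \<Rightarrow> real) \<Rightarrow> bool" where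
  "intensity_matrix M \<longleftrightarrow> (\<forall>i j. i \<noteq> j \<longrightarrow> 0 \<le> M i j) \<and> (\<forall>i. (\<Sum>j\<in>UNIV. M i j) = 0)"

text \<open>The set U: u in ({-1} \<union> [0,T])^n, encoded as a list of length n
  (entry k of the paper is u ! (k-1)), with 0 <= u^1 <= ... <= u^k and
  u^(k+1) = ... = u^n = -1 for some k.\<close>
definition Uset :: "nat \<Rightarrow> real \<Rightarrow> real list set" where
  "Uset n T = {u. length u = n \<and> (\<forall>x\<in>set u. x = -1 \<or> (0 \<le> x \<and> x \<le> T)) \<and>
      (\<exists>k\<le>n. (\<forall>i<k. 0 \<le> u ! i) \<and> sorted (take k u) \<and> (\<forall>i. k \<le> i \<and> i < n \<longrightarrow> u ! i = -1))}"

definition Z :: "real list \<Rightarrow> nat" where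
  "Z u = length (filter (\<lambda>x. x \<noteq> -1) u)"

text \<open>u with entry Z(u)+1 set to t.\<close>
definition push :: "real list \<Rightarrow> real \<Rightarrow> real list" where
  "push u t = u[Z u := t]"

definition TS :: "nat \<Rightarrow> real \<Rightarrow> (real \<times> real list) set" where
  "TS n T = {(t,u). u \<in> Uset n T \<and> 0 \<le> t \<and> t \<le> T \<and> (\<forall>x\<in>set u. x \<le> t)}"

definition abs_cont_on :: "real \<Rightarrow> real \<Rightarrow> (real \<Rightarrow> 's::finite \<Rightarrow> real) \<Rightarrow> bool" where
  "abs_cont_on a b f \<longleftrightarrow> (\<forall>\<epsilon>>0. \<exists>\<delta>>0. \<forall>(N::nat) (c::nat \<Rightarrow> real) d.
      (\<forall>k<N. a \<le> c k \<and> c k \<le> d k \<and> d k \<le> b) \<and>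
      (\<forall>k<N. \<forall>l<N. k \<noteq> l \<longrightarrow> d k \<le> c l \<or> d l \<le> c k) \<and>
      (\<Sum>k<N. d k - c k) < \<delta> \<longrightarrow> (\<Sum>k<N. maxnorm (\<lambda>i. f (d k) i - f (c k) i)) < \<epsilon>)"

definition Mset :: "nat \<Rightarrow> real \<Rightarrow> real \<Rightarrow> (real \<Rightarrow> real list \<Rightarrow> 's::finite \<Rightarrow> real) set" where
  "Mset n T Qmax = {\<mu>. (\<forall>(t,u)\<in>TS n T. \<mu> t u \<in> prob_simplex) \<and>
     (\<forall>t s u. (t,u) \<in> TS n T \<longrightarrow> (s,u) \<in> TS n T \<longrightarrow> maxnorm (\<lambda>i. \<mu> t u i - \<mu> s u i) \<le> Qmax * \<bar>t - s\<bar>)}"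

text \<open>Lower end of the time interval {t. (t,u) in TS}: max(0, max_k u^k).\<close>
definition tstart :: "real list \<Rightarrow> real" where
  "tstart u = Max (insert 0 (set u))"

definition Vset :: "nat \<Rightarrow> real \<Rightarrow> real \<Rightarrow> (real \<Rightarrow> real list \<Rightarrow> 's::finite \<Rightarrow> real) set" where
  "Vset n T vmax = {v. (\<forall>u\<in>Uset n T. abs_cont_on (tstart u) T (\<lambda>t. v t u)) \<and>
     (\<forall>(t,u)\<in>TS n T. maxnorm (v t u) \<le> vmax)}"

text \<open>Qh i j t u m v and psih i t u m v denote hat Q^{ij}(t,u,m,v), hat psi^i(t,u,m,v).\<close>
definition regular_solution ::
  "nat \<Rightarrow> real \<Rightarrow> (nat \<Rightarrow> real \<Rightarrow> ('s::finite \<Rightarrow> real) \<Rightarrow> real)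
   \<Rightarrow> ('s \<Rightarrow> 's \<Rightarrow> real \<Rightarrow> real list \<Rightarrow> ('s \<Rightarrow> real) \<Rightarrow> ('s \<Rightarrow> real) \<Rightarrow> real)
   \<Rightarrow> ('s \<Rightarrow> real \<Rightarrow> real list \<Rightarrow> ('s \<Rightarrow> real) \<Rightarrow> ('s \<Rightarrow> real) \<Rightarrow> real)
   \<Rightarrow> (nat \<Rightarrow> ('s \<Rightarrow> real) \<Rightarrow> 's \<Rightarrow> real)
   \<Rightarrow> (real \<Rightarrow> ('s \<Rightarrow> real) \<Rightarrow> 's \<Rightarrow> 's)
   \<Rightarrow> (real \<Rightarrow> real list \<Rightarrow> 's \<Rightarrow> real)
   \<Rightarrow> (real \<Rightarrow> real list \<Rightarrow> 's \<Rightarrow> real) \<Rightarrow> bool" where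
  "regular_solution n T lam Qh psih Psi J \<mu> v \<longleftrightarrow>
     (\<forall>u\<in>Uset n T.
        abs_cont_on (tstart u) T (\<lambda>t. v t u) \<and>
        (AE t in lborel. t \<in> {tstart u..T} \<longrightarrow>
          (\<forall>i. ((\<lambda>s. v s u i) has_real_derivative
               (- psih i t u (\<mu> t u) (v t u)
                - (\<Sum>j\<in>UNIV. Qh i j t u (\<mu> t u) (v t u) * v t u j)
                - (if Z u < n then lam (Z u + 1) t (\<mu> t u)
                     * (v t (push u t) (J t (\<mu> t u) i) - v t u i) else 0)))
             (at t within {tstart u..T}))) \<and>
        v T u = Psi (Z u) (\<mu> T u))"

end

theory Submission
  imports Defs
begin


definition ac1 :: "real \<Rightarrow> real \<Rightarrow> (real \<Rightarrow> real) \<Rightarrow> bool" where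
  "ac1 a b F \<longleftrightarrow> (\<forall>e>0. \<exists>d>0. \<forall>(N::nat) (c::nat \<Rightarrow> real) dd.
      (\<forall>k<N. a \<le> c k \<and> c k \<le> dd k \<and> dd k \<le> b) \<and>
      (\<forall>k<N. \<forall>l<N. k \<noteq> l \<longrightarrow> dd k \<le> c l \<or> dd l \<le> c k) \<and>
      (\<Sum>k<N. dd k - c k) < d \<longrightarrow> (\<Sum>k<N. \<bar>F (dd k) - F (c k)\<bar>) < e)"

lemma open_small_cover:
  assumes "N \<in> null_sets lborel" "0 < (d::real)"
  obtains U where "open U" "N \<subseteq> U" "U \<in> lmeasurable" "measure lebesgue U < d"
proof -
  have nl: "negligible N" using assms(1) by (simp add: negligible_iff_null_sets null_sets_completionI)
  then have Nl: "N \<in> sets lebesgue" by (simp add: negligible_iff_null_sets null_setsD2)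
  obtain U where U: "open U" "N \<subseteq> U" "(U - N) \<in> lmeasurable" "emeasure lebesgue (U - N) < ennreal d"
    using sets_lebesgue_outer_open[OF Nl assms(2)] by blast
  have NL: "N \<in> lmeasurable" using nl negligible_imp_measurable by blast
  have eq: "U = (U - N) \<union> N" using U by blast
  have UL: "U \<in> lmeasurable" using U(3) NL eq by (metis fmeasurable.Un)
  have "measure lebesgue U \<le> measure lebesgue (U - N) + measure lebesgue N"
    using eq U(3) NL by (metis measure_Un_le fmeasurable_def mem_Collect_eq)
  moreover have "measure lebesgue N = 0" using nl by (simp add: negligible_imp_measure0)
  moreover have "measure lebesgue (U - N) < d" using U(3,4) assms(2)
    by (simp add: emeasure_eq_measure2 ennreal_less_iff)
  ultimately have "measure lebesgue U < d" by linarith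
  with U UL show ?thesis using that by blast
qed

lemma ivl_disj:
  fixes c d c' d' :: real
  assumes "c < d" "c' < d'" "{c<..<d} \<inter> {c'<..<d'} = {}"
  shows "d \<le> c' \<or> d' \<le> c"
proof (rule ccontr)
  assume "\<not> (d \<le> c' \<or> d' \<le> c)"
  then have "max c c' < min d d'" using assms by auto
  then have "(max c c' + min d d') / 2 \<in> {c<..<d} \<inter> {c'<..<d'}" by auto
  then show False using assms by blast
qed

lemma measure_Icc_lebesgue: "(c::real) \<le> d \<Longrightarrow> measure lebesgue {c..d} = d - c"
  by (simp add: content_real)

lemma ac_mono:
  fixes F P :: "real \<Rightarrow> real"
  assumes ab: "a \<le> b" and ac: "ac1 a b F"
    and mono: "\<forall>x\<in>{a..b}. \<forall>y\<in>{a..b}. x \<le> y \<longrightarrow> P x \<le> P y"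
    and ae: "AE t in lborel. t \<in> {a..b} \<longrightarrow> (\<exists>D\<ge>0. ((\<lambda>s. F s + P s) has_real_derivative D) (at t within {a..b}))"
  shows "F a + P a \<le> F b + P b"
proof -
  define G where "G = (\<lambda>s. F s + P s)"
  obtain N where N: "{t \<in> space lborel. \<not> (t \<in> {a..b} \<longrightarrow> (\<exists>D\<ge>0. (G has_real_derivative D) (at t within {a..b})))} \<subseteq> N"
     "emeasure lborel N = 0" "N \<in> sets lborel"
    using AE_E[OF ae] unfolding G_def by blast
  have Nn: "N \<in> null_sets lborel" using N by (simp add: null_sets_def)
  have good: "\<exists>D\<ge>0. (G has_real_derivative D) (at t within {a..b})" if "t \<in> {a..b}" "t \<notin> N" for t
    using N(1) that by auto
  have main: "G a - e * (b - a + 1) \<le> G b" if e: "e > 0" for e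
  proof -
    obtain \<delta> where \<delta>: "\<delta> > 0" and ac\<delta>: "\<forall>(M::nat) (c::nat \<Rightarrow> real) dd. (\<forall>k<M. a \<le> c k \<and> c k \<le> dd k \<and> dd k \<le> b) \<and>
       (\<forall>k<M. \<forall>l<M. k \<noteq> l \<longrightarrow> dd k \<le> c l \<or> dd l \<le> c k) \<and> (\<Sum>k<M. dd k - c k) < \<delta> \<longrightarrow> (\<Sum>k<M. \<bar>F (dd k) - F (c k)\<bar>) < e"
      using ac e unfolding ac1_def by blast
    obtain U where U: "open U" "N \<subseteq> U" "U \<in> lmeasurable" "measure lebesgue U < \<delta>"
      using open_small_cover[OF Nn \<delta>] by blast
    define Qr where "Qr x r \<longleftrightarrow> (x \<in> {a..b} \<and> x \<notin> N \<longrightarrow> (\<forall>y\<in>{a..b}. \<bar>y - x\<bar> < r \<longrightarrow> (x \<le> y \<longrightarrow> G x - e*(y-x) \<le> G y) \<and> (y \<le> x \<longrightarrow> G y - e*(x-y) \<le> G x)))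
        \<and> (x \<in> N \<longrightarrow> ball x r \<subseteq> U)" for x r
    have "\<exists>r>0. Qr x r" for x
    proof (cases "x \<in> N")
      case True
      then obtain r where "r > 0" "ball x r \<subseteq> U" using U(1,2) open_contains_ball by blast
      then show ?thesis using True unfolding Qr_def by (intro exI[of _ r] conjI impI) auto
    next
      case False
      show ?thesis
      proof (cases "x \<in> {a..b}")
        case True
        then obtain D where D: "D \<ge> 0" "(G has_real_derivative D) (at x within {a..b})" using good False by blast
        have H: "\<forall>e>0. \<exists>d>0. \<forall>y\<in>{a..b}. norm (y - x) < d \<longrightarrow> norm (G y - G x - D * (y - x)) \<le> e * norm (y - x)"
          using D(2) unfolding has_field_derivative_def has_derivative_within_alt by (rule conjunct2)
        have "\<exists>d>0. \<forall>y\<in>{a..b}. norm (y - x) < d \<longrightarrow> norm (G y - G x - D * (y - x)) \<le> e * norm (y - x)"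
          using H e by blast
        then obtain r where r: "r > 0" "\<forall>y\<in>{a..b}. \<bar>y - x\<bar> < r \<longrightarrow> \<bar>G y - G x - D * (y - x)\<bar> \<le> e * \<bar>y - x\<bar>" by auto
        have "(\<forall>y\<in>{a..b}. \<bar>y - x\<bar> < r \<longrightarrow> (x \<le> y \<longrightarrow> G x - e*(y-x) \<le> G y) \<and> (y \<le> x \<longrightarrow> G y - e*(x-y) \<le> G x))"
        proof (intro ballI impI conjI)
          fix y assume y: "y \<in> {a..b}" "\<bar>y - x\<bar> < r"
          have h: "\<bar>G y - G x - D * (y - x)\<bar> \<le> e * \<bar>y - x\<bar>" using r y by blast
          { assume xy: "x \<le> y" then have "D*(y-x) \<ge> 0" using D by simp
            then show "G x - e*(y-x) \<le> G y" using h xy by (simp add: abs_le_iff algebra_simps) }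
          { assume xy: "y \<le> x" then have "D*(y-x) \<le> 0" using D by (simp add: mult_nonneg_nonpos)
            then show "G y - e*(x-y) \<le> G x" using h xy by (simp add: abs_le_iff algebra_simps) }
        qed
        then show ?thesis using r(1) False unfolding Qr_def by blast
      next
        case False2: False
        show ?thesis using False False2 unfolding Qr_def by (intro exI[of _ 1]) auto
      qed
    qed
    then have "\<forall>x. \<exists>r. r > 0 \<and> Qr x r" by blast
    from choice[OF this] obtain r where r0: "\<forall>x. r x > 0 \<and> Qr x (r x)" by blast
    have r: "\<And>x. r x > 0"
      "\<And>x y. x \<in> {a..b} \<Longrightarrow> x \<notin> N \<Longrightarrow> y \<in> {a..b} \<Longrightarrow> \<bar>y - x\<bar> < r x \<Longrightarrow> x \<le> y \<Longrightarrow> G x - e*(y-x) \<le> G y"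
      "\<And>x y. x \<in> {a..b} \<Longrightarrow> x \<notin> N \<Longrightarrow> y \<in> {a..b} \<Longrightarrow> \<bar>y - x\<bar> < r x \<Longrightarrow> y \<le> x \<Longrightarrow> G y - e*(x-y) \<le> G x"
      "\<And>x. x \<in> N \<Longrightarrow> ball x (r x) \<subseteq> U"
      using r0 unfolding Qr_def by blast+
    have gauge: "gauge (\<lambda>x. ball x (r x))" using r(1) by (intro gauge_ball_dependent) auto
    obtain p where p: "p tagged_division_of {a..b}" "(\<lambda>x. ball x (r x)) fine p"
      using fine_division_exists_real[OF gauge] by blast
    have pK: "\<exists>c d. K = {c..d} \<and> c \<le> d \<and> x \<in> {c..d} \<and> {c..d} \<subseteq> {a..b} \<and> {c..d} \<subseteq> ball x (r x)"
      if "(x,K) \<in> p" for x K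
    proof -
      from tagged_division_ofD(4)[OF p(1) that] obtain c d where K: "K = cbox c d" by blast
      have "x \<in> K" "K \<subseteq> {a..b}" using tagged_division_ofD(2,3)[OF p(1) that] by auto
      moreover have "K \<subseteq> ball x (r x)" using p(2) that unfolding fine_def by auto
      ultimately show ?thesis using K by (intro exI[of _ c] exI[of _ d]) auto
    qed
    have tel: "(\<Sum>(x,K)\<in>p. G (Sup K) - G (Inf K)) = G b - G a" using additive_tagged_division_1[OF ab p(1)] .
    have len: "(\<Sum>(x,K)\<in>p. Sup K - Inf K) = b - a" using additive_tagged_division_1[OF ab p(1), of "\<lambda>x. x"] by simp
    define p1 where "p1 = {(x,K)\<in>p. x \<notin> N}"
    define p2 where "p2 = {(x,K)\<in>p. x \<in> N}"
    have fin: "finite p" using p(1) by blast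
    have sub12: "p1 \<subseteq> p" "p2 \<subseteq> p" unfolding p1_def p2_def by auto
    have fin1: "finite p1" "finite p2" using fin sub12 finite_subset by blast+
    have puni: "p = p1 \<union> p2" "p1 \<inter> p2 = {}" unfolding p1_def p2_def by auto
    have split: "(\<Sum>(x,K)\<in>p. G (Sup K) - G (Inf K)) = (\<Sum>(x,K)\<in>p1. G (Sup K) - G (Inf K)) + (\<Sum>(x,K)\<in>p2. G (Sup K) - G (Inf K))"
      using sum.union_disjoint[OF fin1 puni(2)] puni(1) by simp
    have s1: "(\<Sum>(x,K)\<in>p1. G (Sup K) - G (Inf K)) \<ge> - e * (b - a)"
    proof -
      have "(\<Sum>(x,K)\<in>p1. G (Sup K) - G (Inf K)) \<ge> (\<Sum>(x,K)\<in>p1. - e * (Sup K - Inf K))"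
      proof (rule sum_mono)
        fix xK assume xK: "xK \<in> p1"
        obtain x K where xKe: "xK = (x,K)" by fastforce
        with xK have xp: "(x,K) \<in> p" "x \<notin> N" unfolding p1_def by auto
        obtain c d where cd: "K = {c..d}" "c \<le> d" "x \<in> {c..d}" "{c..d} \<subseteq> {a..b}" "{c..d} \<subseteq> ball x (r x)"
          using pK[OF xp(1)] by blast
        have xab: "x \<in> {a..b}" using cd by auto
        have cab: "c \<in> {a..b}" "d \<in> {a..b}" using cd by auto
        have cr: "\<bar>c - x\<bar> < r x" "\<bar>d - x\<bar> < r x" using cd(2,5) by (auto simp: dist_real_def subset_iff)
        have 1: "G x - e*(d-x) \<le> G d" using r(2)[OF xab xp(2) cab(2) cr(2)] cd(3) by auto
        have 2: "G c - e*(x-c) \<le> G x" using r(3)[OF xab xp(2) cab(1) cr(1)] cd(3) by auto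
        show "(case xK of (x, K) \<Rightarrow> - e * (Sup K - Inf K)) \<le> (case xK of (x, K) \<Rightarrow> G (Sup K) - G (Inf K))"
          using 1 2 cd(1,2) xKe by (simp add: algebra_simps)
      qed
      moreover have "(\<Sum>(x,K)\<in>p1. - e * (Sup K - Inf K)) = - e * (\<Sum>(x,K)\<in>p1. Sup K - Inf K)"
        by (simp add: sum_distrib_left case_prod_unfold)
      moreover have "(\<Sum>(x,K)\<in>p1. Sup K - Inf K) \<le> (\<Sum>(x,K)\<in>p. Sup K - Inf K)"
      proof (rule sum_mono2[OF fin])
        show "p1 \<subseteq> p" unfolding p1_def by auto
        fix xK assume "xK \<in> p - p1"
        then have xKp: "xK \<in> p" by blast
        obtain x K where xKe: "xK = (x,K)" by (cases xK)
        obtain c d where "K = {c..d}" "c \<le> d" using pK[of x K] xKp xKe by blast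
        then show "0 \<le> (case xK of (x, K) \<Rightarrow> Sup K - Inf K)" using xKe by simp
      qed
      ultimately have X: "(\<Sum>(x,K)\<in>p1. G (Sup K) - G (Inf K)) \<ge> - e * (\<Sum>(x,K)\<in>p1. Sup K - Inf K)"
        and Y: "(\<Sum>(x,K)\<in>p1. Sup K - Inf K) \<le> b - a" using len by simp_all
      have "e * (\<Sum>(x,K)\<in>p1. Sup K - Inf K) \<le> e * (b - a)" using Y e by (intro mult_left_mono) auto
      then show ?thesis using X by linarith
    qed
    have s2: "(\<Sum>(x,K)\<in>p2. G (Sup K) - G (Inf K)) \<ge> - e"
    proof -
      define p3 where "p3 = {(x,K)\<in>p2. Inf K < Sup K}"
      have p3p: "p3 \<subseteq> p" unfolding p3_def p2_def by auto
      have fin3: "finite p3" using fin p3p finite_subset by blast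
      have p3D: "\<exists>c d. K = {c..d} \<and> c < d \<and> {c..d} \<subseteq> {a..b} \<and> {c..d} \<subseteq> U" if "(x,K) \<in> p3" for x K
      proof -
        have xp: "(x,K) \<in> p" "x \<in> N" "Inf K < Sup K" using that unfolding p3_def p2_def by auto
        obtain c d where cd: "K = {c..d}" "c \<le> d" "x \<in> {c..d}" "{c..d} \<subseteq> {a..b}" "{c..d} \<subseteq> ball x (r x)"
          using pK[OF xp(1)] by blast
        have "c < d" using xp(3) cd(1,2) by simp
        moreover have "{c..d} \<subseteq> U" using cd(5) r(4)[OF xp(2)] by blast
        ultimately show ?thesis using cd by blast
      qed
      have A: "(\<Sum>(x,K)\<in>p2. G (Sup K) - G (Inf K)) \<ge> (\<Sum>(x,K)\<in>p2. - \<bar>F (Sup K) - F (Inf K)\<bar>)"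
      proof (rule sum_mono)
        fix xK assume xK: "xK \<in> p2"
        obtain x K where xKe: "xK = (x,K)" by (cases xK)
        with xK have xp: "(x,K) \<in> p" unfolding p2_def by auto
        obtain c d where cd: "K = {c..d}" "c \<le> d" "{c..d} \<subseteq> {a..b}"
          using pK[OF xp(1)] by blast
        have cdab: "c \<in> {a..b}" "d \<in> {a..b}" using cd(2,3) by auto
        have Pcd: "P c \<le> P d" using mono cdab cd(2) by blast
        have SI: "Sup K = d" "Inf K = c" using cd(1,2) by simp_all
        have "- \<bar>F d - F c\<bar> \<le> F d + P d - (F c + P c)" using Pcd by linarith
        then show "(case xK of (x, K) \<Rightarrow> - \<bar>F (Sup K) - F (Inf K)\<bar>) \<le> (case xK of (x, K) \<Rightarrow> G (Sup K) - G (Inf K))"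
          using xKe SI unfolding G_def by simp
      qed
      have B: "(\<Sum>(x,K)\<in>p2. - \<bar>F (Sup K) - F (Inf K)\<bar>) = (\<Sum>(x,K)\<in>p3. - \<bar>F (Sup K) - F (Inf K)\<bar>)"
      proof (rule sum.mono_neutral_right[OF fin1(2)])
        show "p3 \<subseteq> p2" unfolding p3_def by auto
        show "\<forall>i\<in>p2 - p3. (case i of (x, K) \<Rightarrow> - \<bar>F (Sup K) - F (Inf K)\<bar>) = 0"
        proof
          fix xK assume xK: "xK \<in> p2 - p3"
          obtain x K where xKe: "xK = (x,K)" by (cases xK)
          have xK2: "(x,K) \<in> p2" "(x,K) \<notin> p3" using xK xKe by auto
          have xp: "(x,K) \<in> p" using xK2(1) unfolding p2_def by blast
          have nlt: "\<not> Inf K < Sup K" using xK2 unfolding p3_def by blast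
          obtain c d where cd: "K = {c..d}" "c \<le> d"
            using pK[OF xp] by blast
          have SI: "Sup K = d" "Inf K = c" using cd(1,2) by simp_all
          have "Sup K = Inf K" using nlt cd(2) SI by linarith
          then show "(case xK of (x, K) \<Rightarrow> - \<bar>F (Sup K) - F (Inf K)\<bar>) = 0" using xKe by simp
        qed
      qed
      have inj: "inj_on snd p3"
      proof (rule inj_onI)
        fix y z assume yz: "y \<in> p3" "z \<in> p3" "snd y = snd z"
        show "y = z"
        proof (rule ccontr)
          assume ne: "y \<noteq> z"
          obtain x K where ye: "y = (x,K)" by (cases y)
          obtain x' K' where ze: "z = (x',K')" by (cases z)
          have m: "(x,K) \<in> p" "(x',K') \<in> p" using yz(1,2) ye ze p3p by blast+
          have "(x,K) \<noteq> (x',K')" using ne ye ze by simp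
          then have "interior K \<inter> interior K' = {}"
            using tagged_division_ofD(5)[OF p(1) m] by blast
          moreover have "K = K'" using yz(3) ye ze by simp
          moreover obtain c d where "K = {c..d}" "c < d" using p3D yz(1) ye by blast
          ultimately show False by auto
        qed
      qed
      have p3S: "\<exists>x c d. (x,S) \<in> p3 \<and> S = {c..d} \<and> c < d \<and> S \<subseteq> U" if Sin: "S \<in> snd ` p3" for S
      proof -
        obtain xK where xK: "xK \<in> p3" "S = snd xK" using Sin by blast
        obtain x K where e: "xK = (x,K)" by (cases xK)
        have "(x,S) \<in> p3" using xK e by simp
        moreover obtain c d where "S = {c..d}" "c < d" "{c..d} \<subseteq> U" using p3D[OF calculation] by blast
        ultimately show ?thesis by blast
      qed
      have C: "(\<Sum>(x,K)\<in>p3. Sup K - Inf K) < \<delta>"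
      proof -
        have "(\<Sum>(x,K)\<in>p3. Sup K - Inf K) = (\<Sum>(x,K)\<in>p3. measure lebesgue K)"
        proof (rule sum.cong[OF refl])
          fix xK assume "xK \<in> p3"
          moreover obtain x K where e: "xK = (x,K)" by (cases xK)
          ultimately obtain c d where "K = {c..d}" "c < d" using p3D by blast
          note this e
          then show "(case xK of (x, K) \<Rightarrow> Sup K - Inf K) = (case xK of (x, K) \<Rightarrow> measure lebesgue K)"
            by (simp add: measure_Icc_lebesgue)
        qed
        also have "\<dots> = (\<Sum>K\<in>snd ` p3. measure lebesgue K)"
          using sum.reindex[OF inj, of "measure lebesgue"] by (simp add: case_prod_unfold)
        also have "\<dots> = measure lebesgue (\<Union>(snd ` p3))"
        proof (rule measure_negligible_finite_Union[symmetric])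
          show "finite (snd ` p3)" using fin3 by blast
          show "S \<in> lmeasurable" if "S \<in> snd ` p3" for S
            using p3S[OF that] by auto
          show "pairwise (\<lambda>S T. negligible (S \<inter> T)) (snd ` p3)"
          proof (rule pairwiseI)
            fix S T assume ST: "S \<in> snd ` p3" "T \<in> snd ` p3" "S \<noteq> T"
            obtain x y where xy: "(x,S) \<in> p3" "(y,T) \<in> p3" using p3S[OF ST(1)] p3S[OF ST(2)] by blast
            then have "(x,S) \<noteq> (y,T)" using ST(3) by auto
            then have dis: "interior S \<inter> interior T = {}"
              using tagged_division_ofD(5)[OF p(1)] xy p3p by blast
            obtain c d where S: "S = {c..d}" "c < d" using p3D xy(1) by blast
            obtain c' d' where T: "T = {c'..d'}" "c' < d'" using p3D xy(2) by blast
            have "d \<le> c' \<or> d' \<le> c" using ivl_disj[OF S(2) T(2)] dis S T by simp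
            then have "S \<inter> T \<subseteq> {c, d}" using S T by auto
            then show "negligible (S \<inter> T)" by (rule negligible_subset[rotated]) auto
          qed
        qed
        also have "\<dots> \<le> measure lebesgue U"
        proof (rule measure_mono_fmeasurable)
          show "\<Union>(snd ` p3) \<subseteq> U" using p3S by (meson Union_least)
          show "\<Union>(snd ` p3) \<in> sets lebesgue"
          proof (rule sets.finite_Union)
            show "finite (snd ` p3)" using fin3 by blast
            show "snd ` p3 \<subseteq> sets lebesgue"
            proof
              fix S assume "S \<in> snd ` p3"
              then obtain c d where "S = {c..d}" using p3S by blast
              then show "S \<in> sets lebesgue" by simp
            qed
          qed
          show "U \<in> fmeasurable lebesgue" using U(3) .
        qed
        finally show ?thesis using U(4) by linarith
      qed
      obtain h where h: "bij_betw h {0..<card p3} p3" using ex_bij_betw_nat_finite[OF fin3] by blast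
      define M where "M = card p3"
      define c where "c k = Inf (snd (h k))" for k
      define dd where "dd k = Sup (snd (h k))" for k
      have hk: "h k \<in> p3" if "k < M" for k using h that unfolding M_def bij_betw_def by auto
      have hkD: "\<exists>x. h k = (x, {c k..dd k}) \<and> c k < dd k \<and> {c k..dd k} \<subseteq> {a..b}" if kM: "k < M" for k
      proof -
        obtain x K where e: "h k = (x,K)" by (cases "h k")
        obtain c0 d0 where "K = {c0..d0}" "c0 < d0" "{c0..d0} \<subseteq> {a..b}" using p3D[of x K] hk[OF kM] e by auto
        then show ?thesis using e unfolding c_def dd_def by auto
      qed
      have c1: "\<forall>k<M. a \<le> c k \<and> c k \<le> dd k \<and> dd k \<le> b"
      proof (intro allI impI)
        fix k assume k: "k < M"
        obtain x where "c k < dd k" "{c k..dd k} \<subseteq> {a..b}" using hkD[OF k] by blast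
        then show "a \<le> c k \<and> c k \<le> dd k \<and> dd k \<le> b" by auto
      qed
      have c2: "\<forall>k<M. \<forall>l<M. k \<noteq> l \<longrightarrow> dd k \<le> c l \<or> dd l \<le> c k"
      proof (intro allI impI)
        fix k l assume kl: "k < M" "l < M" "k \<noteq> l"
        then have "h k \<noteq> h l" using h unfolding M_def bij_betw_def inj_on_def by auto
        moreover obtain x where x: "h k = (x, {c k..dd k})" "c k < dd k" using hkD[OF kl(1)] by blast
        moreover obtain y where y: "h l = (y, {c l..dd l})" "c l < dd l" using hkD[OF kl(2)] by blast
        ultimately have ne: "(x, {c k..dd k}) \<noteq> (y, {c l..dd l})" by simp
        have m: "(x, {c k..dd k}) \<in> p" "(y, {c l..dd l}) \<in> p" using hk[OF kl(1)] hk[OF kl(2)] p3p x y by auto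
        have "interior {c k..dd k} \<inter> interior {c l..dd l} = {}"
          using tagged_division_ofD(5)[OF p(1) m ne] by blast
        then show "dd k \<le> c l \<or> dd l \<le> c k" using ivl_disj[OF x(2) y(2)] by simp
      qed
      have sumeq: "(\<Sum>k<M. f (h k)) = (\<Sum>xK\<in>p3. f xK)" for f :: "real \<times> real set \<Rightarrow> real"
        using sum.reindex_bij_betw[OF h, of f] unfolding M_def by (simp add: lessThan_atLeast0)
      have "(\<Sum>k<M. dd k - c k) = (\<Sum>(x,K)\<in>p3. Sup K - Inf K)"
        using sumeq[of "\<lambda>(x,K). Sup K - Inf K"] unfolding c_def dd_def by (simp add: case_prod_unfold)
      then have c3: "(\<Sum>k<M. dd k - c k) < \<delta>" using C by simp
      have "(\<Sum>k<M. \<bar>F (dd k) - F (c k)\<bar>) < e" using ac\<delta> c1 c2 c3 by blast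
      moreover have "(\<Sum>k<M. \<bar>F (dd k) - F (c k)\<bar>) = (\<Sum>(x,K)\<in>p3. \<bar>F (Sup K) - F (Inf K)\<bar>)"
        using sumeq[of "\<lambda>(x,K). \<bar>F (Sup K) - F (Inf K)\<bar>"] unfolding c_def dd_def by (simp add: case_prod_unfold)
      ultimately have "(\<Sum>(x,K)\<in>p3. - \<bar>F (Sup K) - F (Inf K)\<bar>) > - e"
        by (simp add: sum_negf case_prod_unfold)
      then show ?thesis using A B by linarith
    qed
    have "e * (b - a + 1) = e * (b - a) + e" by (simp add: algebra_simps)
    then show ?thesis using tel split s1 s2 by linarith
  qed
  have "G a \<le> G b"
  proof (rule field_le_epsilon)
    fix e :: real assume e: "e > 0"
    have "G a - (e / (b - a + 1)) * (b - a + 1) \<le> G b" using main[of "e / (b - a + 1)"] e ab by simp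
    then show "G a \<le> G b + e" using ab by simp
  qed
  then show ?thesis unfolding G_def .
qed



lemma finite_range_s: "finite (range (g :: 's::finite \<Rightarrow> real))" by simp

lemma maxnorm_ge: "\<bar>x i\<bar> \<le> maxnorm x"
  unfolding maxnorm_def by (rule Max_ge) auto

lemma maxnorm_le: "(\<And>i. \<bar>x i\<bar> \<le> B) \<Longrightarrow> maxnorm x \<le> B"
  unfolding maxnorm_def by (subst Max_le_iff) auto

lemma maxnorm_nonneg: "0 \<le> maxnorm x"
  using maxnorm_ge[of x] abs_ge_zero order_trans by blast

lemma maxnorm_commute: "maxnorm (\<lambda>i. x i - y i) = maxnorm (\<lambda>i. y i - x i)"
  unfolding maxnorm_def by (simp add: abs_minus_commute)

lemma maxnorm_diff_le: "\<bar>maxnorm x - maxnorm y\<bar> \<le> maxnorm (\<lambda>i. x i - y i)"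
proof -
  have "maxnorm x \<le> maxnorm y + maxnorm (\<lambda>i. x i - y i)"
  proof (rule maxnorm_le)
    fix i
    have "\<bar>x i\<bar> \<le> \<bar>y i\<bar> + \<bar>x i - y i\<bar>" by linarith
    then show "\<bar>x i\<bar> \<le> maxnorm y + maxnorm (\<lambda>i. x i - y i)"
      using maxnorm_ge[of y i] maxnorm_ge[of "\<lambda>i. x i - y i" i] by linarith
  qed
  moreover have "maxnorm y \<le> maxnorm x + maxnorm (\<lambda>i. x i - y i)"
  proof (rule maxnorm_le)
    fix i
    have "\<bar>y i\<bar> \<le> \<bar>x i\<bar> + \<bar>x i - y i\<bar>" by linarith
    then show "\<bar>y i\<bar> \<le> maxnorm x + maxnorm (\<lambda>i. x i - y i)"
      using maxnorm_ge[of x i] maxnorm_ge[of "\<lambda>i. x i - y i" i] by linarith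
  qed
  ultimately show ?thesis by linarith
qed

lemma matnorm_ge: "(\<Sum>j\<in>UNIV. \<bar>M i j\<bar>) \<le> matnorm M"
  unfolding matnorm_def by (rule Max_ge) auto

lemma ac_comp:
  fixes f :: "real \<Rightarrow> 's::finite \<Rightarrow> real"
  assumes ac: "abs_cont_on a T f" and as: "a \<le> s" and sg: "\<bar>\<sigma>\<bar> \<le> 1"
  shows "ac1 s T (\<lambda>t. \<sigma> * f t i)"
  unfolding ac1_def
proof (intro allI impI)
  fix e :: real assume e: "e > 0"
  obtain d where d: "d > 0" and H: "\<forall>(N::nat) (c::nat \<Rightarrow> real) dd.
      (\<forall>k<N. a \<le> c k \<and> c k \<le> dd k \<and> dd k \<le> T) \<and>
      (\<forall>k<N. \<forall>l<N. k \<noteq> l \<longrightarrow> dd k \<le> c l \<or> dd l \<le> c k) \<and>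
      (\<Sum>k<N. dd k - c k) < d \<longrightarrow> (\<Sum>k<N. maxnorm (\<lambda>i. f (dd k) i - f (c k) i)) < e"
    using ac e unfolding abs_cont_on_def by blast
  show "\<exists>d>0. \<forall>(N::nat) (c::nat \<Rightarrow> real) dd. (\<forall>k<N. s \<le> c k \<and> c k \<le> dd k \<and> dd k \<le> T) \<and>
      (\<forall>k<N. \<forall>l<N. k \<noteq> l \<longrightarrow> dd k \<le> c l \<or> dd l \<le> c k) \<and>
      (\<Sum>k<N. dd k - c k) < d \<longrightarrow> (\<Sum>k<N. \<bar>\<sigma> * f (dd k) i - \<sigma> * f (c k) i\<bar>) < e"
  proof (intro exI[of _ d] conjI allI impI d)
    fix N :: nat and c dd :: "nat \<Rightarrow> real"
    assume A: "(\<forall>k<N. s \<le> c k \<and> c k \<le> dd k \<and> dd k \<le> T) \<and>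
      (\<forall>k<N. \<forall>l<N. k \<noteq> l \<longrightarrow> dd k \<le> c l \<or> dd l \<le> c k) \<and> (\<Sum>k<N. dd k - c k) < d"
    then have A1: "\<forall>k<N. a \<le> c k \<and> c k \<le> dd k \<and> dd k \<le> T" using as by force
    have lt: "(\<Sum>k<N. maxnorm (\<lambda>i. f (dd k) i - f (c k) i)) < e" using H A A1 by blast
    have "(\<Sum>k<N. \<bar>\<sigma> * f (dd k) i - \<sigma> * f (c k) i\<bar>) \<le> (\<Sum>k<N. maxnorm (\<lambda>i. f (dd k) i - f (c k) i))"
    proof (rule sum_mono)
      fix k
      have "\<bar>\<sigma> * f (dd k) i - \<sigma> * f (c k) i\<bar> = \<bar>\<sigma>\<bar> * \<bar>f (dd k) i - f (c k) i\<bar>"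
        by (simp add: abs_mult right_diff_distrib[symmetric])
      also have "\<dots> \<le> 1 * \<bar>f (dd k) i - f (c k) i\<bar>" using sg by (intro mult_right_mono) auto
      also have "\<dots> \<le> maxnorm (\<lambda>i. f (dd k) i - f (c k) i)" using maxnorm_ge[of "\<lambda>i. f (dd k) i - f (c k) i" i] by simp
      finally show "\<bar>\<sigma> * f (dd k) i - \<sigma> * f (c k) i\<bar> \<le> maxnorm (\<lambda>i. f (dd k) i - f (c k) i)" .
    qed
    then show "(\<Sum>k<N. \<bar>\<sigma> * f (dd k) i - \<sigma> * f (c k) i\<bar>) < e" using lt by linarith
  qed
qed

lemma ac_close:
  fixes f :: "real \<Rightarrow> 's::finite \<Rightarrow> real"
  assumes ac: "abs_cont_on a T f" and e: "e > 0"
  obtains d where "d > 0" "\<And>x y. x \<in> {a..T} \<Longrightarrow> y \<in> {a..T} \<Longrightarrow> \<bar>x - y\<bar> < d \<Longrightarrow> maxnorm (\<lambda>i. f x i - f y i) < e"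
proof -
  obtain d where d: "d > 0" and H: "\<forall>(N::nat) (c::nat \<Rightarrow> real) dd.
      (\<forall>k<N. a \<le> c k \<and> c k \<le> dd k \<and> dd k \<le> T) \<and>
      (\<forall>k<N. \<forall>l<N. k \<noteq> l \<longrightarrow> dd k \<le> c l \<or> dd l \<le> c k) \<and>
      (\<Sum>k<N. dd k - c k) < d \<longrightarrow> (\<Sum>k<N. maxnorm (\<lambda>i. f (dd k) i - f (c k) i)) < e"
    using ac e unfolding abs_cont_on_def by blast
  have "maxnorm (\<lambda>i. f x i - f y i) < e" if xy: "x \<in> {a..T}" "y \<in> {a..T}" "\<bar>x - y\<bar> < d" for x y
  proof -
    define c :: "nat \<Rightarrow> real" where "c = (\<lambda>_. min x y)"
    define dd :: "nat \<Rightarrow> real" where "dd = (\<lambda>_. max x y)"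
    have "(\<forall>k<1. a \<le> c k \<and> c k \<le> dd k \<and> dd k \<le> T) \<and>
      (\<forall>k<1. \<forall>l<1. k \<noteq> l \<longrightarrow> dd k \<le> c l \<or> dd l \<le> c k) \<and> (\<Sum>k<1. dd k - c k) < d"
      using xy unfolding c_def dd_def by auto
    then have "(\<Sum>k<(1::nat). maxnorm (\<lambda>i. f (dd k) i - f (c k) i)) < e" using H by blast
    then have "maxnorm (\<lambda>i. f (max x y) i - f (min x y) i) < e" unfolding c_def dd_def by simp
    then show ?thesis
    proof (cases "x \<le> y")
      case True
      then have "max x y = y" "min x y = x" by auto
      then have "maxnorm (\<lambda>i. f y i - f x i) < e" using \<open>maxnorm (\<lambda>i. f (max x y) i - f (min x y) i) < e\<close> by simp
      then show ?thesis using maxnorm_commute[of "f y" "f x"] by simp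
    next
      case False
      then have "max x y = x" "min x y = y" by auto
      then show ?thesis using \<open>maxnorm (\<lambda>i. f (max x y) i - f (min x y) i) < e\<close> by simp
    qed
  qed
  then show ?thesis using that d by blast
qed

lemma ac_maxnorm_cont:
  fixes f :: "real \<Rightarrow> 's::finite \<Rightarrow> real"
  assumes ac: "abs_cont_on a T f"
  shows "continuous_on {a..T} (\<lambda>t. maxnorm (f t))"
  unfolding continuous_on_iff
proof (intro ballI allI impI)
  fix x e :: real assume x: "x \<in> {a..T}" and e: "e > 0"
  obtain d where d: "d > 0" "\<And>x y. x \<in> {a..T} \<Longrightarrow> y \<in> {a..T} \<Longrightarrow> \<bar>x - y\<bar> < d \<Longrightarrow> maxnorm (\<lambda>i. f x i - f y i) < e"
    using ac_close[OF ac e] by blast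
  show "\<exists>d>0. \<forall>x'\<in>{a..T}. dist x' x < d \<longrightarrow> dist (maxnorm (f x')) (maxnorm (f x)) < e"
  proof (intro exI[of _ d] conjI ballI impI d(1))
    fix y assume y: "y \<in> {a..T}" "dist y x < d"
    have "\<bar>maxnorm (f y) - maxnorm (f x)\<bar> \<le> maxnorm (\<lambda>i. f y i - f x i)" by (rule maxnorm_diff_le)
    also have "\<dots> < e" using d(2)[OF y(1) x] y(2) by (simp add: dist_real_def)
    finally show "dist (maxnorm (f y)) (maxnorm (f x)) < e" by (simp add: dist_real_def)
  qed
qed



lemma phi_deriv:
  "((\<lambda>s. (c + e + (\<alpha>+e)*(T-s)) * exp(K*(T-s))) has_real_derivative
     (-(\<alpha>+e)*exp(K*(T-t)) - K*((c + e + (\<alpha>+e)*(T-t)) * exp(K*(T-t))))) (at t)"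
  by (rule derivative_eq_intros refl | simp)+

lemma phi_mono:
  assumes "x \<le> y" "y \<le> T" "0 \<le> c" "0 \<le> e" "0 \<le> \<alpha>" "0 \<le> (K::real)"
  shows "(c + e + (\<alpha>+e)*(T-y)) * exp(K*(T-y)) \<le> (c + e + (\<alpha>+e)*(T-x)) * exp(K*(T-x))"
proof (rule mult_mono)
  show "c + e + (\<alpha>+e)*(T-y) \<le> c + e + (\<alpha>+e)*(T-x)" using assms by (simp add: mult_left_mono)
  show "exp(K*(T-y)) \<le> exp(K*(T-x))" using assms by (simp add: mult_left_mono)
  show "0 \<le> c + e + (\<alpha>+e)*(T-x)" using assms by simp
  show "0 \<le> exp(K*(T-y))" by simp
qed

lemma gronwall_back:
  fixes f :: "real \<Rightarrow> 's::finite \<Rightarrow> real"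
  assumes aT: "a \<le> T" and ac: "abs_cont_on a T f"
    and der: "AE t in lborel. t \<in> {a..T} \<longrightarrow> (\<forall>i. \<exists>D. ((\<lambda>s. f s i) has_real_derivative D) (at t within {a..T})
                 \<and> \<bar>D\<bar> \<le> \<alpha> + K * maxnorm (f t))"
    and fT: "maxnorm (f T) \<le> c" and al: "0 \<le> \<alpha>" and K: "0 \<le> K" and c: "0 \<le> c"
    and t: "t \<in> {a..T}"
  shows "maxnorm (f t) \<le> (c + \<alpha>*(T-t)) * exp(K*(T-t))"
proof -
  define \<phi> where "\<phi> e s = (c + e + (\<alpha>+e)*(T-s)) * exp(K*(T-s))" for e s
  define M where "M s = maxnorm (f s)" for s
  have Mc: "continuous_on {a..T} M" unfolding M_def by (rule ac_maxnorm_cont[OF ac])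
  have key: "M s < \<phi> e s" if e: "e > 0" and s: "s \<in> {a..T}" for e s
  proof (rule ccontr)
    assume "\<not> M s < \<phi> e s"
    define S where "S = {a..T} \<inter> (\<lambda>s. M s - \<phi> e s) -` {0..}"
    have sS: "s \<in> S" using s \<open>\<not> M s < \<phi> e s\<close> unfolding S_def by auto
    have phic: "continuous_on {a..T} (\<phi> e)" unfolding \<phi>_def by (intro continuous_intros)
    have clS: "closed S" unfolding S_def
      by (rule continuous_closed_preimage) (auto intro: continuous_on_diff Mc phic)
    have bS: "bdd_above S" unfolding S_def by (rule bdd_aboveI[of _ T]) auto
    define s0 where "s0 = Sup S"
    have s0S: "s0 \<in> S" unfolding s0_def using closed_contains_Sup[OF _ bS clS] sS by blast
    have s0: "s0 \<in> {a..T}" "\<phi> e s0 \<le> M s0" using s0S unfolding S_def by auto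
    have s0T: "s0 < T"
    proof (rule ccontr)
      assume "\<not> s0 < T"
      then have "s0 = T" using s0 by auto
      then have "\<phi> e T \<le> M T" using s0 by simp
      moreover have "\<phi> e T = c + e" unfolding \<phi>_def by simp
      ultimately show False using fT e unfolding M_def by simp
    qed
    have after: "M x < \<phi> e x" if x: "x \<in> {s0<..T}" for x
    proof (rule ccontr)
      assume "\<not> M x < \<phi> e x"
      then have "x \<in> S" using x s0 unfolding S_def by auto
      then have "x \<le> s0" unfolding s0_def using bS by (rule cSup_upper)
      then show False using x by simp
    qed
    have comp: "\<sigma> * f s0 i - \<phi> e s0 \<le> - e" if sg: "\<sigma> = 1 \<or> \<sigma> = -1" for \<sigma> i
    proof -
      have sga: "\<bar>\<sigma>\<bar> \<le> 1" using sg by auto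
      have "(\<lambda>t. \<sigma> * f t i) s0 + (\<lambda>t. - \<phi> e t) s0 \<le> (\<lambda>t. \<sigma> * f t i) T + (\<lambda>t. - \<phi> e t) T"
      proof (rule ac_mono)
        show "s0 \<le> T" using s0T by simp
        show "ac1 s0 T (\<lambda>t. \<sigma> * f t i)" using ac_comp[OF ac _ sga] s0 by simp
        show "\<forall>x\<in>{s0..T}. \<forall>y\<in>{s0..T}. x \<le> y \<longrightarrow> - \<phi> e x \<le> - \<phi> e y"
          unfolding \<phi>_def using phi_mono c e al K by auto
        have "AE t in lborel. t \<noteq> s0" by (rule AE_lborel_singleton)
        then show "AE t in lborel. t \<in> {s0..T} \<longrightarrow> (\<exists>D\<ge>0. ((\<lambda>s. \<sigma> * f s i + - \<phi> e s) has_real_derivative D) (at t within {s0..T}))"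
          using der
        proof eventually_elim
          case (elim t)
          show ?case
          proof
            assume tin: "t \<in> {s0..T}"
            then have tin2: "t \<in> {a..T}" "t \<in> {s0<..T}" using elim(1) s0 by auto
            obtain D where D: "((\<lambda>s. f s i) has_real_derivative D) (at t within {a..T})"
              "\<bar>D\<bar> \<le> \<alpha> + K * maxnorm (f t)" using elim(2) tin2(1) by blast
            have D': "((\<lambda>s. f s i) has_real_derivative D) (at t within {s0..T})"
              using D(1) by (rule DERIV_subset) (use s0 in auto)
            have P': "((\<lambda>s. \<phi> e s) has_real_derivative (-(\<alpha>+e)*exp(K*(T-t)) - K*\<phi> e t)) (at t within {s0..T})"
              unfolding \<phi>_def by (rule has_field_derivative_at_within[OF phi_deriv])
            have tot: "((\<lambda>s. \<sigma> * f s i + - \<phi> e s) has_real_derivative (\<sigma> * D + - (-(\<alpha>+e)*exp(K*(T-t)) - K*\<phi> e t))) (at t within {s0..T})"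
              by (intro DERIV_add DERIV_cmult DERIV_minus D' P')
            have Mt: "maxnorm (f t) \<le> \<phi> e t" using after[OF tin2(2)] unfolding M_def by simp
            have "\<sigma> * D \<ge> - \<bar>D\<bar>" using sg by auto
            moreover have "K * maxnorm (f t) \<le> K * \<phi> e t" by (rule mult_left_mono[OF Mt K])
            moreover have "exp(K*(T-t)) \<ge> 1" using K tin by simp
            then have "(\<alpha>+e)*exp(K*(T-t)) \<ge> (\<alpha>+e) * 1" using al e by (intro mult_left_mono) auto
            then have "(\<alpha>+e)*exp(K*(T-t)) \<ge> \<alpha>+e" by simp
            moreover have eqq: "- (-(\<alpha>+e)*exp(K*(T-t)) - K*\<phi> e t) = (\<alpha>+e)*exp(K*(T-t)) + K*\<phi> e t" by (simp add: algebra_simps)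
            ultimately have "\<sigma> * D + ((\<alpha>+e)*exp(K*(T-t)) + K*\<phi> e t) \<ge> 0" using D(2) e by linarith
            then have "\<sigma> * D + - (-(\<alpha>+e)*exp(K*(T-t)) - K*\<phi> e t) \<ge> 0" using eqq by simp
            then show "\<exists>D\<ge>0. ((\<lambda>s. \<sigma> * f s i + - \<phi> e s) has_real_derivative D) (at t within {s0..T})"
              using tot by blast
          qed
        qed
      qed
      then have "\<sigma> * f s0 i - \<phi> e s0 \<le> \<sigma> * f T i - \<phi> e T" by simp
      also have "\<sigma> * f T i \<le> \<bar>f T i\<bar>" using sg by auto
      also have "\<bar>f T i\<bar> \<le> c" using maxnorm_ge[of "f T" i] fT by simp
      also have "\<phi> e T = c + e" unfolding \<phi>_def by simp
      finally show ?thesis by simp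
    qed
    have "M s0 \<le> \<phi> e s0 - e" unfolding M_def
    proof (rule maxnorm_le)
      fix i
      have "1 * f s0 i - \<phi> e s0 \<le> - e" "(-1) * f s0 i - \<phi> e s0 \<le> - e" using comp[of 1 i] comp[of "-1" i] by auto
      then show "\<bar>f s0 i\<bar> \<le> \<phi> e s0 - e" by simp
    qed
    then show False using s0(2) e by simp
  qed
  show ?thesis
  proof (rule field_le_epsilon)
    fix e :: real assume e: "e > 0"
    define B where "B = (1 + (T - t)) * exp(K*(T-t))"
    have B: "B > 0" unfolding B_def using t by simp
    have "M t < \<phi> (e / B) t" using key[OF _ t] e B by simp
    also have "\<phi> (e / B) t = (c + \<alpha>*(T-t)) * exp(K*(T-t)) + (e / B) * B"
    proof -
      have "\<phi> d t = (c + \<alpha>*(T-t)) * exp(K*(T-t)) + d * B" for d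
        unfolding \<phi>_def B_def by (simp add: algebra_simps)
      then show ?thesis .
    qed
    also have "\<dots> = (c + \<alpha>*(T-t)) * exp(K*(T-t)) + e" using B by simp
    finally show "maxnorm (f t) \<le> (c + \<alpha>*(T-t)) * exp(K*(T-t)) + e" unfolding M_def by simp
  qed
qed



lemma matnorm_nonneg: "0 \<le> matnorm (M :: 's::finite \<Rightarrow> 's \<Rightarrow> real)"
proof -
  have "0 \<le> (\<Sum>j\<in>UNIV. \<bar>M undefined j\<bar>)" by (rule sum_nonneg) simp
  then show ?thesis using matnorm_ge[of M undefined] by linarith
qed

lemma matnorm_le: "(\<And>i. (\<Sum>j\<in>UNIV. \<bar>M i j\<bar>) \<le> B) \<Longrightarrow> matnorm (M :: 's::finite \<Rightarrow> 's \<Rightarrow> real) \<le> B"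
  unfolding matnorm_def by (subst Max_le_iff) auto

lemma sum_prod_bound:
  fixes Q :: "'s::finite \<Rightarrow> 's \<Rightarrow> real" and x :: "'s \<Rightarrow> real"
  shows "\<bar>\<Sum>j\<in>UNIV. Q i j * x j\<bar> \<le> matnorm Q * maxnorm x"
proof -
  have "\<bar>\<Sum>j\<in>UNIV. Q i j * x j\<bar> \<le> (\<Sum>j\<in>UNIV. \<bar>Q i j * x j\<bar>)" by (rule sum_abs)
  also have "\<dots> \<le> (\<Sum>j\<in>UNIV. \<bar>Q i j\<bar> * maxnorm x)"
    by (rule sum_mono) (simp add: abs_mult maxnorm_ge mult_left_mono)
  also have "\<dots> = (\<Sum>j\<in>UNIV. \<bar>Q i j\<bar>) * maxnorm x" by (simp add: sum_distrib_right)
  also have "\<dots> \<le> matnorm Q * maxnorm x" by (rule mult_right_mono[OF matnorm_ge maxnorm_nonneg])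
  finally show ?thesis .
qed

lemma pointwise:
  fixes psA psB xA xB yA yB :: "'s::finite \<Rightarrow> real" and QA QB :: "'s \<Rightarrow> 's \<Rightarrow> real" and J :: "'s \<Rightarrow> 's"
  assumes p: "maxnorm (\<lambda>i. psA i - psB i) \<le> Lp*(dmu + dx)"
    and q: "matnorm (\<lambda>i j. QA i j - QB i j) \<le> Lq*(dmu+dx)"
    and qm: "matnorm QB \<le> Qm" and xA: "maxnorm xA \<le> V" and yA: "b \<Longrightarrow> maxnorm yA \<le> V"
    and dx: "dx = maxnorm (\<lambda>i. xA i - xB i)"
    and l: "b \<Longrightarrow> \<bar>lA - lB\<bar> \<le> Ll*dmu" "b \<Longrightarrow> 0 \<le> lB" "b \<Longrightarrow> lB \<le> lm"
    and y: "b \<Longrightarrow> maxnorm (\<lambda>i. yA i - yB i) \<le> B" and lm0: "0 \<le> lm"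
    and dm: "dmu \<le> dm" and nn: "0 \<le> Lp" "0 \<le> Lq" "0 \<le> Ll" "0 \<le> dmu" "0 \<le> B"
  shows "\<bar>(- psA i - (\<Sum>j\<in>UNIV. QA i j * xA j) - (if b then lA * (yA (J i) - xA i) else 0))
          - (- psB i - (\<Sum>j\<in>UNIV. QB i j * xB j) - (if b then lB * (yB (J i) - xB i) else 0))\<bar>
         \<le> (Lp + Lq*V + 2*V*Ll)*dm + lm*B + (Lp + V*Lq + Qm + lm)*dx"
proof -
  have V: "0 \<le> V" using xA maxnorm_nonneg order_trans by blast
  have dx0: "0 \<le> dx" using dx maxnorm_nonneg by simp
  have a: "\<bar>psA i - psB i\<bar> \<le> Lp*dmu + Lp*dx" using p maxnorm_ge[of "\<lambda>i. psA i - psB i" i] by (simp add: algebra_simps)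
  have beq: "(\<Sum>j\<in>UNIV. QA i j * xA j) - (\<Sum>j\<in>UNIV. QB i j * xB j)
      = (\<Sum>j\<in>UNIV. (QA i j - QB i j) * xA j) + (\<Sum>j\<in>UNIV. QB i j * (xA j - xB j))"
    by (simp add: sum_subtractf[symmetric] sum.distrib[symmetric] algebra_simps)
  have b1: "\<bar>\<Sum>j\<in>UNIV. (QA i j - QB i j) * xA j\<bar> \<le> (Lq*dmu + Lq*dx) * V"
  proof -
    have "\<bar>\<Sum>j\<in>UNIV. (QA i j - QB i j) * xA j\<bar> \<le> matnorm (\<lambda>i j. QA i j - QB i j) * maxnorm xA"
      using sum_prod_bound[of "\<lambda>i j. QA i j - QB i j" i xA] by simp
    also have "\<dots> \<le> (Lq*dmu + Lq*dx) * V"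
      using q xA nn dx0 by (intro mult_mono) (auto simp: algebra_simps matnorm_nonneg maxnorm_nonneg)
    finally show ?thesis .
  qed
  have b2: "\<bar>\<Sum>j\<in>UNIV. QB i j * (xA j - xB j)\<bar> \<le> Qm * dx"
  proof -
    have "\<bar>\<Sum>j\<in>UNIV. QB i j * (xA j - xB j)\<bar> \<le> matnorm QB * maxnorm (\<lambda>j. xA j - xB j)"
      by (rule sum_prod_bound)
    also have "\<dots> \<le> Qm * dx" using qm dx dx0 matnorm_nonneg[of QB] by (intro mult_mono) auto
    finally show ?thesis .
  qed
  have c: "\<bar>(if b then lA * (yA (J i) - xA i) else 0) - (if b then lB * (yB (J i) - xB i) else 0)\<bar>
       \<le> 2*V*Ll*dmu + lm*B + lm*dx"
  proof (cases b)
    case False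
    then show ?thesis using V nn lm0 dx0 by simp
  next
    case True
    have ceq: "lA * (yA (J i) - xA i) - lB * (yB (J i) - xB i) = (lA - lB) * (yA (J i) - xA i) + lB * ((yA (J i) - yB (J i)) - (xA i - xB i))"
      by (simp add: algebra_simps)
    have "\<bar>yA (J i) - xA i\<bar> \<le> 2*V" using maxnorm_ge[of yA "J i"] maxnorm_ge[of xA i] xA yA[OF True] by linarith
    then have c1: "\<bar>(lA - lB) * (yA (J i) - xA i)\<bar> \<le> (Ll*dmu) * (2*V)"
      unfolding abs_mult using l(1)[OF True] by (intro mult_mono) auto
    have "\<bar>(yA (J i) - yB (J i)) - (xA i - xB i)\<bar> \<le> B + dx"
      using maxnorm_ge[of "\<lambda>i. yA i - yB i" "J i"] maxnorm_ge[of "\<lambda>i. xA i - xB i" i] y[OF True] dx by linarith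
    then have c2: "\<bar>lB * ((yA (J i) - yB (J i)) - (xA i - xB i))\<bar> \<le> lm * (B + dx)"
      unfolding abs_mult using l(2,3)[OF True] lm0 by (intro mult_mono) auto
    show ?thesis using True ceq c1 c2 by (simp add: algebra_simps)
  qed
  have tot: "\<bar>(- psA i - (\<Sum>j\<in>UNIV. QA i j * xA j) - (if b then lA * (yA (J i) - xA i) else 0))
          - (- psB i - (\<Sum>j\<in>UNIV. QB i j * xB j) - (if b then lB * (yB (J i) - xB i) else 0))\<bar>
        \<le> (Lp*dmu + Lp*dx) + ((Lq*dmu + Lq*dx) * V + Qm * dx) + (2*V*Ll*dmu + lm*B + lm*dx)"
    using a b1 b2 c beq by (smt (verit))
  have "(Lp + Lq*V + 2*V*Ll)*dmu \<le> (Lp + Lq*V + 2*V*Ll)*dm"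
    using dm nn V by (intro mult_left_mono) auto
  then show ?thesis using tot by (simp add: algebra_simps)
qed



lemma Z_eq:
  assumes len: "length u = n" and k: "k \<le> n" and pos: "\<forall>i<k. 0 \<le> u ! i"
    and neg: "\<forall>i. k \<le> i \<and> i < n \<longrightarrow> u ! i = -1"
  shows "Z u = k"
proof -
  have u: "u = take k u @ drop k u" by simp
  have f1: "filter (\<lambda>x. x \<noteq> -1) (take k u) = take k u"
  proof (rule filter_True)
    show "\<forall>x\<in>set (take k u). x \<noteq> - 1"
    proof
      fix x assume "x \<in> set (take k u)"
      then obtain i where "i < length (take k u)" "x = take k u ! i" by (auto simp: in_set_conv_nth)
      then have "i < k" "x = u ! i" using len k by auto
      then show "x \<noteq> -1" using pos by force
    qed
  qed
  have f2: "filter (\<lambda>x. x \<noteq> -1) (drop k u) = []"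
  proof (rule filter_False)
    show "\<forall>x\<in>set (drop k u). \<not> x \<noteq> - 1"
    proof
      fix x assume "x \<in> set (drop k u)"
      then obtain i where "i < length (drop k u)" "x = drop k u ! i" by (auto simp: in_set_conv_nth)
      then have "k + i < n" "x = u ! (k + i)" using len k by auto
      then show "\<not> x \<noteq> -1" using neg by auto
    qed
  qed
  have "filter (\<lambda>x. x \<noteq> -1) u = filter (\<lambda>x. x \<noteq> -1) (take k u) @ filter (\<lambda>x. x \<noteq> -1) (drop k u)"
    by (metis append_take_drop_id filter_append)
  then have "Z u = length (take k u)" unfolding Z_def using f1 f2 by simp
  then show ?thesis using len k by simp
qed

lemma Uset_Z:
  assumes "u \<in> Uset n T"
  shows "length u = n" "Z u \<le> n" "\<forall>i<Z u. 0 \<le> u ! i" "sorted (take (Z u) u)"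
    "\<forall>i. Z u \<le> i \<and> i < n \<longrightarrow> u ! i = -1" "\<forall>x\<in>set u. x = -1 \<or> (0 \<le> x \<and> x \<le> T)"
proof -
  obtain k where k: "k \<le> n" "\<forall>i<k. 0 \<le> u ! i" "sorted (take k u)" "\<forall>i. k \<le> i \<and> i < n \<longrightarrow> u ! i = -1"
    and len: "length u = n" and el: "\<forall>x\<in>set u. x = -1 \<or> (0 \<le> x \<and> x \<le> T)"
    using assms unfolding Uset_def by blast
  have "Z u = k" using Z_eq[OF len k(1,2,4)] .
  then show "length u = n" "Z u \<le> n" "\<forall>i<Z u. 0 \<le> u ! i" "sorted (take (Z u) u)"
    "\<forall>i. Z u \<le> i \<and> i < n \<longrightarrow> u ! i = -1" "\<forall>x\<in>set u. x = -1 \<or> (0 \<le> x \<and> x \<le> T)"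
    using k len el by auto
qed

lemma tstart_ge: "0 \<le> tstart u" "x \<in> set u \<Longrightarrow> x \<le> tstart u"
  unfolding tstart_def by (auto intro: Max_ge)

lemma tstart_le:
  assumes "u \<in> Uset n T" "0 \<le> T"
  shows "tstart u \<le> T"
proof -
  have "\<forall>x\<in>set u. x \<le> T" using Uset_Z(6)[OF assms(1)] assms(2) by force
  then show ?thesis unfolding tstart_def using assms(2) by (subst Max_le_iff) auto
qed

lemma TS_iff:
  "(t,u) \<in> TS n T \<longleftrightarrow> u \<in> Uset n T \<and> tstart u \<le> t \<and> t \<le> T"
proof
  assume "(t,u) \<in> TS n T"
  then have "u \<in> Uset n T" "0 \<le> t" "t \<le> T" "\<forall>x\<in>set u. x \<le> t" unfolding TS_def by auto
  moreover have "tstart u \<le> t" unfolding tstart_def using calculation by (subst Max_le_iff) auto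
  ultimately show "u \<in> Uset n T \<and> tstart u \<le> t \<and> t \<le> T" by blast
next
  assume A: "u \<in> Uset n T \<and> tstart u \<le> t \<and> t \<le> T"
  then have "0 \<le> t" "\<forall>x\<in>set u. x \<le> t" using tstart_ge(1)[of u] tstart_ge(2)[of _ u] by force+
  then show "(t,u) \<in> TS n T" using A unfolding TS_def by auto
qed

lemma push_TS:
  assumes tu: "(t,u) \<in> TS n T" and Zn: "Z u < n"
  shows "(t, push u t) \<in> TS n T" "Z (push u t) = Z u + 1"
proof -
  have U: "u \<in> Uset n T" and t: "0 \<le> t" "t \<le> T" and ut: "\<forall>x\<in>set u. x \<le> t" using tu unfolding TS_def by auto
  define k where "k = Z u"
  note Uk = Uset_Z[OF U, folded k_def]
  define w where "w = push u t"
  have w: "w = u[k := t]" unfolding w_def push_def k_def ..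
  have lw: "length w = n" using Uk(1) w by simp
  have kn: "k < n" using Zn k_def by simp
  have wk: "w ! i = (if i = k then t else u ! i)" if "i < n" for i
    using that Uk(1) w by (simp add: nth_list_update)
  have pos: "\<forall>i<k+1. 0 \<le> w ! i" using wk Uk(3) t kn by auto
  have neg: "\<forall>i. k+1 \<le> i \<and> i < n \<longrightarrow> w ! i = -1" using wk Uk(5) by auto
  have Zw: "Z w = k + 1" using Z_eq[OF lw _ pos neg] kn by simp
  have tk: "take (k+1) w = take k u @ [t]"
  proof (rule nth_equalityI)
    show "length (take (k+1) w) = length (take k u @ [t])" using lw Uk(1) kn by simp
    fix i assume "i < length (take (k+1) w)"
    then have i: "i < k + 1" using lw kn by simp
    show "take (k+1) w ! i = (take k u @ [t]) ! i"
    proof (cases "i < k")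
      case True
      then show ?thesis using wk[of i] kn Uk(1) by (simp add: nth_append)
    next
      case False
      then have "i = k" using i by simp
      then show ?thesis using wk[of i] kn Uk(1) by (simp add: nth_append)
    qed
  qed
  have "set (take k u) \<subseteq> set u" by (rule set_take_subset)
  then have srt: "sorted (take (k+1) w)" unfolding tk using Uk(4) ut by (auto simp: sorted_append)
  have setw: "set w \<subseteq> insert t (set u)" unfolding w by (rule set_update_subset_insert)
  have el: "\<forall>x\<in>set w. x = -1 \<or> (0 \<le> x \<and> x \<le> T)" using setw Uk(6) t by blast
  have wU: "w \<in> Uset n T" unfolding Uset_def using lw el pos srt neg kn
    by (intro CollectI conjI exI[of _ "k+1"]) auto
  have "\<forall>x\<in>set w. x \<le> t" using setw ut by auto
  then show "(t, push u t) \<in> TS n T" using wU t unfolding TS_def w_def by auto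
  show "Z (push u t) = Z u + 1" using Zw unfolding w_def k_def .
qed

lemma TS_nonempty:
  assumes "0 \<le> T"
  shows "(0, replicate n (-1)) \<in> TS n T"
  unfolding TS_def Uset_def using assms by (auto intro!: exI[of _ 0])

lemma simplex_le1: "m \<in> prob_simplex \<Longrightarrow> 0 \<le> m i \<and> m i \<le> (1::real)"
proof -
  assume m: "m \<in> prob_simplex"
  then have nn: "\<forall>i. 0 \<le> m i" and s: "(\<Sum>i\<in>UNIV. m i) = 1" unfolding prob_simplex_def by auto
  have "m i \<le> (\<Sum>i\<in>UNIV. m i)" by (rule member_le_sum) (use nn in auto)
  then show ?thesis using nn s by auto
qed

lemma simplex_diff: "m1 \<in> prob_simplex \<Longrightarrow> m2 \<in> prob_simplex \<Longrightarrow> maxnorm (\<lambda>i. m1 i - m2 i) \<le> 1"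
  by (rule maxnorm_le) (smt (verit) simplex_le1)

lemma ac_diff:
  fixes f g :: "real \<Rightarrow> 's::finite \<Rightarrow> real"
  assumes f: "abs_cont_on a T f" and g: "abs_cont_on a T g"
  shows "abs_cont_on a T (\<lambda>t i. f t i - g t i)"
  unfolding abs_cont_on_def
proof (intro allI impI)
  fix e :: real assume e: "e > 0"
  then have e2: "e/2 > 0" by simp
  obtain d1 where d1: "d1 > 0" and H1: "\<forall>(N::nat) (c::nat \<Rightarrow> real) d.
      (\<forall>k<N. a \<le> c k \<and> c k \<le> d k \<and> d k \<le> T) \<and>
      (\<forall>k<N. \<forall>l<N. k \<noteq> l \<longrightarrow> d k \<le> c l \<or> d l \<le> c k) \<and>
      (\<Sum>k<N. d k - c k) < d1 \<longrightarrow> (\<Sum>k<N. maxnorm (\<lambda>i. f (d k) i - f (c k) i)) < e/2"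
    using f e2 unfolding abs_cont_on_def by blast
  obtain d2 where d2: "d2 > 0" and H2: "\<forall>(N::nat) (c::nat \<Rightarrow> real) d.
      (\<forall>k<N. a \<le> c k \<and> c k \<le> d k \<and> d k \<le> T) \<and>
      (\<forall>k<N. \<forall>l<N. k \<noteq> l \<longrightarrow> d k \<le> c l \<or> d l \<le> c k) \<and>
      (\<Sum>k<N. d k - c k) < d2 \<longrightarrow> (\<Sum>k<N. maxnorm (\<lambda>i. g (d k) i - g (c k) i)) < e/2"
    using g e2 unfolding abs_cont_on_def by blast
  show "\<exists>\<delta>>0. \<forall>(N::nat) (c::nat \<Rightarrow> real) d. (\<forall>k<N. a \<le> c k \<and> c k \<le> d k \<and> d k \<le> T) \<and>
      (\<forall>k<N. \<forall>l<N. k \<noteq> l \<longrightarrow> d k \<le> c l \<or> d l \<le> c k) \<and>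
      (\<Sum>k<N. d k - c k) < \<delta> \<longrightarrow>
      (\<Sum>k<N. maxnorm (\<lambda>i. (f (d k) i - g (d k) i) - (f (c k) i - g (c k) i))) < e"
  proof (intro exI[of _ "min d1 d2"] conjI allI impI)
    show "min d1 d2 > 0" using d1 d2 by simp
    fix N :: nat and c d :: "nat \<Rightarrow> real"
    assume A: "(\<forall>k<N. a \<le> c k \<and> c k \<le> d k \<and> d k \<le> T) \<and>
      (\<forall>k<N. \<forall>l<N. k \<noteq> l \<longrightarrow> d k \<le> c l \<or> d l \<le> c k) \<and> (\<Sum>k<N. d k - c k) < min d1 d2"
    have s1: "(\<Sum>k<N. maxnorm (\<lambda>i. f (d k) i - f (c k) i)) < e/2" using H1 A by auto
    have s2: "(\<Sum>k<N. maxnorm (\<lambda>i. g (d k) i - g (c k) i)) < e/2" using H2 A by auto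
    have "(\<Sum>k<N. maxnorm (\<lambda>i. (f (d k) i - g (d k) i) - (f (c k) i - g (c k) i)))
        \<le> (\<Sum>k<N. maxnorm (\<lambda>i. f (d k) i - f (c k) i) + maxnorm (\<lambda>i. g (d k) i - g (c k) i))"
    proof (rule sum_mono)
      fix k
      show "maxnorm (\<lambda>i. (f (d k) i - g (d k) i) - (f (c k) i - g (c k) i))
          \<le> maxnorm (\<lambda>i. f (d k) i - f (c k) i) + maxnorm (\<lambda>i. g (d k) i - g (c k) i)"
      proof (rule maxnorm_le)
        fix i
        show "\<bar>(f (d k) i - g (d k) i) - (f (c k) i - g (c k) i)\<bar>
          \<le> maxnorm (\<lambda>i. f (d k) i - f (c k) i) + maxnorm (\<lambda>i. g (d k) i - g (c k) i)"
          using maxnorm_ge[of "\<lambda>i. f (d k) i - f (c k) i" i] maxnorm_ge[of "\<lambda>i. g (d k) i - g (c k) i" i]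
          by linarith
      qed
    qed
    then show "(\<Sum>k<N. maxnorm (\<lambda>i. (f (d k) i - g (d k) i) - (f (c k) i - g (c k) i))) < e"
      using s1 s2 by (simp add: sum.distrib)
  qed
qed



theorem lemmaB6:
  fixes n :: nat and T :: real
    and A :: "'b::euclidean_space set"
    and lam :: "nat \<Rightarrow> real \<Rightarrow> ('s::finite \<Rightarrow> real) \<Rightarrow> real"
    and Q :: "real \<Rightarrow> nat \<Rightarrow> ('s \<Rightarrow> real) \<Rightarrow> 'b \<Rightarrow> 's \<Rightarrow> 's \<Rightarrow> real"
    and psi :: "real \<Rightarrow> nat \<Rightarrow> ('s \<Rightarrow> real) \<Rightarrow> 'b \<Rightarrow> 's \<Rightarrow> real"
    and Psi :: "nat \<Rightarrow> ('s \<Rightarrow> real) \<Rightarrow> 's \<Rightarrow> real"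
    and J :: "real \<Rightarrow> ('s \<Rightarrow> real) \<Rightarrow> 's \<Rightarrow> 's"
    and h :: "real \<Rightarrow> real list \<Rightarrow> ('s \<Rightarrow> real) \<Rightarrow> ('s \<Rightarrow> real) \<Rightarrow> 's \<Rightarrow> 'b"
    and L_psih L_Qh L_Psi L_lam Qmax psimax Psimax lammax vmax K1 K2 :: real
    and \<mu>1 \<mu>2 v1 v2 :: "real \<Rightarrow> real list \<Rightarrow> 's \<Rightarrow> real"
  assumes n_pos: "1 \<le> n" and T_pos: "0 < T"
    (* standing assumptions on the data *)
    and lam_pos: "\<And>k t m. k \<in> {1..n} \<Longrightarrow> t \<in> {0..T} \<Longrightarrow> m \<in> prob_simplex \<Longrightarrow> 0 < lam k t m"
    and lam_bdd: "bdd_above {lam k t m | k t m. k \<in> {1..n} \<and> t \<in> {0..T} \<and> m \<in> prob_simplex}"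
    and Q_int: "\<And>t k m a. t \<in> {0..T} \<Longrightarrow> k \<le> n \<Longrightarrow> m \<in> prob_simplex \<Longrightarrow> a \<in> A \<Longrightarrow>
                   intensity_matrix (Q t k m a)"
    and Q_bdd: "bdd_above {matnorm (Q t k m a) | t k m a. t \<in> {0..T} \<and> k \<le> n \<and> m \<in> prob_simplex \<and> a \<in> A}"
    and psi_bdd: "bdd_above {maxnorm (psi t k m a) | t k m a. t \<in> {0..T} \<and> k \<le> n \<and> m \<in> prob_simplex \<and> a \<in> A}"
    and Psi_bdd: "bdd_above {maxnorm (Psi k m) | k m. k \<le> n \<and> m \<in> prob_simplex}"
    (* the maximizer h *)
    and h_in: "\<And>t u m v i. t \<in> {0..T} \<Longrightarrow> u \<in> Uset n T \<Longrightarrow> m \<in> prob_simplex \<Longrightarrow> h t u m v i \<in> A"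
    and h_max: "\<And>t u m v i a. t \<in> {0..T} \<Longrightarrow> u \<in> Uset n T \<Longrightarrow> m \<in> prob_simplex \<Longrightarrow> a \<in> A \<Longrightarrow>
       psi t (Z u) m a i + (\<Sum>j\<in>UNIV. Q t (Z u) m a i j * v j)
         \<le> psi t (Z u) m (h t u m v i) i + (\<Sum>j\<in>UNIV. Q t (Z u) m (h t u m v i) i j * v j)"
    (* conditions (i)-(v) *)
    and L_nonneg: "0 \<le> L_psih" "0 \<le> L_Qh" "0 \<le> L_Psi" "0 \<le> L_lam"
    and cond_i: "\<And>t u m1 m2 w1 w2. t \<in> {0..T} \<Longrightarrow> u \<in> Uset n T \<Longrightarrow> m1 \<in> prob_simplex \<Longrightarrow> m2 \<in> prob_simplex \<Longrightarrow>
       maxnorm (\<lambda>i. psi t (Z u) m1 (h t u m1 w1 i) i - psi t (Z u) m2 (h t u m2 w2 i) i)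
         \<le> L_psih * (maxnorm (\<lambda>i. m1 i - m2 i) + maxnorm (\<lambda>i. w1 i - w2 i))"
    and cond_ii: "\<And>t u m1 m2 w1 w2. t \<in> {0..T} \<Longrightarrow> u \<in> Uset n T \<Longrightarrow> m1 \<in> prob_simplex \<Longrightarrow> m2 \<in> prob_simplex \<Longrightarrow>
       matnorm (\<lambda>i j. Q t (Z u) m1 (h t u m1 w1 i) i j - Q t (Z u) m2 (h t u m2 w2 i) i j)
         \<le> L_Qh * (maxnorm (\<lambda>i. m1 i - m2 i) + maxnorm (\<lambda>i. w1 i - w2 i))"
    and cond_iii: "\<And>k m1 m2. k \<le> n \<Longrightarrow> m1 \<in> prob_simplex \<Longrightarrow> m2 \<in> prob_simplex \<Longrightarrow>
       maxnorm (\<lambda>i. Psi k m1 i - Psi k m2 i) \<le> L_Psi * maxnorm (\<lambda>i. m1 i - m2 i)"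
    and cond_iv: "\<And>k t m1 m2. k \<in> {1..n} \<Longrightarrow> t \<in> {0..T} \<Longrightarrow> m1 \<in> prob_simplex \<Longrightarrow> m2 \<in> prob_simplex \<Longrightarrow>
       \<bar>lam k t m1 - lam k t m2\<bar> \<le> L_lam * maxnorm (\<lambda>i. m1 i - m2 i)"
    and cond_v: "\<And>t m1 m2. t \<in> {0..T} \<Longrightarrow> m1 \<in> prob_simplex \<Longrightarrow> m2 \<in> prob_simplex \<Longrightarrow> J t m1 = J t m2"
    (* constants *)
    and Qmax_def: "Qmax = (SUP (t,k,m,a)\<in>{(t,k,m,a). t \<in> {0..T} \<and> k \<le> n \<and> m \<in> prob_simplex \<and> a \<in> A}.
                              matnorm (Q t k m a))"
    and psimax_def: "psimax = (SUP (t,k,m,a)\<in>{(t,k,m,a). t \<in> {0..T} \<and> k \<le> n \<and> m \<in> prob_simplex \<and> a \<in> A}.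
                              maxnorm (psi t k m a))"
    and Psimax_def: "Psimax = (SUP (k,m)\<in>{(k,m). k \<le> n \<and> m \<in> prob_simplex}. maxnorm (Psi k m))"
    and lammax_def: "lammax = (SUP (k,t,m)\<in>{(k,t,m). k \<in> {1..n} \<and> t \<in> {0..T} \<and> m \<in> prob_simplex}. lam k t m)"
    and vmax_def: "vmax = (Psimax + psimax * T) * exp ((Qmax + lammax) * T)
                     * (\<Sum>i\<le>n. (exp ((Qmax + lammax) * T) * lammax * T) ^ i)"
    and K1_def: "K1 = L_psih + L_Qh * vmax + 2 * vmax * L_lam"
    and K2_def: "K2 = L_psih + vmax * L_Qh + Qmax + lammax"
    (* mu_1, mu_2 in M and v_1 = F(mu_1), v_2 = F(mu_2) *)
    and mu1: "\<mu>1 \<in> Mset n T Qmax" and mu2: "\<mu>2 \<in> Mset n T Qmax"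
    and v1V: "v1 \<in> Vset n T vmax" and v2V: "v2 \<in> Vset n T vmax"
    and v1: "regular_solution n T lam
               (\<lambda>i j t u m v. Q t (Z u) m (h t u m v i) i j)
               (\<lambda>i t u m v. psi t (Z u) m (h t u m v i) i) Psi J \<mu>1 v1"
    and v2: "regular_solution n T lam
               (\<lambda>i j t u m v. Q t (Z u) m (h t u m v i) i j)
               (\<lambda>i t u m v. psi t (Z u) m (h t u m v i) i) Psi J \<mu>2 v2"
  shows "(SUP (t,u)\<in>TS n T. maxnorm (\<lambda>i. v1 t u i - v2 t u i))
           \<le> (L_Psi + K1 * T) * exp (K2 * T) * (\<Sum>i\<le>n. (exp (K2 * T) * lammax * T) ^ i)
             * (SUP (t,u)\<in>TS n T. maxnorm (\<lambda>i. \<mu>1 t u i - \<mu>2 t u i))"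
proof -
  have T0: "0 \<le> T" using T_pos by simp
  define u0 where "u0 = (replicate n (-1) :: real list)"
  have TS0: "(0, u0) \<in> TS n T" using TS_nonempty[OF T0] unfolding u0_def .
  have U0: "u0 \<in> Uset n T" using TS0 unfolding TS_def by auto
  have mu1S: "\<mu>1 t u \<in> prob_simplex" if "(t,u) \<in> TS n T" for t u
    using mu1 that unfolding Mset_def by auto
  have mu2S: "\<mu>2 t u \<in> prob_simplex" if "(t,u) \<in> TS n T" for t u
    using mu2 that unfolding Mset_def by auto
  have v1b: "maxnorm (v1 t u) \<le> vmax" if "(t,u) \<in> TS n T" for t u
    using v1V that unfolding Vset_def by auto
  have v2b: "maxnorm (v2 t u) \<le> vmax" if "(t,u) \<in> TS n T" for t u
    using v2V that unfolding Vset_def by auto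
  have vmax0: "0 \<le> vmax" using v1b[OF TS0] maxnorm_nonneg order_trans by blast
  have Qle: "matnorm (Q t k m a) \<le> Qmax"
    if "t \<in> {0..T}" "k \<le> n" "m \<in> prob_simplex" "a \<in> A" for t k m a
  proof -
    have bdd: "bdd_above ((\<lambda>(t,k,m,a). matnorm (Q t k m a)) ` {(t,k,m,a). t \<in> {0..T} \<and> k \<le> n \<and> m \<in> prob_simplex \<and> a \<in> A})"
      using Q_bdd by (rule bdd_above_mono) auto
    have "(t,k,m,a) \<in> {(t,k,m,a). t \<in> {0..T} \<and> k \<le> n \<and> m \<in> prob_simplex \<and> a \<in> A}" using that by simp
    from cSUP_upper[OF this bdd] show ?thesis unfolding Qmax_def by simp
  qed
  have lamle: "lam k t m \<le> lammax"
    if "k \<in> {1..n}" "t \<in> {0..T}" "m \<in> prob_simplex" for t k m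
  proof -
    have bdd: "bdd_above ((\<lambda>(k,t,m). lam k t m) ` {(k,t,m). k \<in> {1..n} \<and> t \<in> {0..T} \<and> m \<in> prob_simplex})"
      using lam_bdd by (rule bdd_above_mono) auto
    have "(k,t,m) \<in> {(k,t,m). k \<in> {1..n} \<and> t \<in> {0..T} \<and> m \<in> prob_simplex}" using that by simp
    from cSUP_upper[OF this bdd] show ?thesis unfolding lammax_def by simp
  qed
  have m0: "\<mu>1 0 u0 \<in> prob_simplex" by (rule mu1S[OF TS0])
  have a0: "h 0 u0 (\<mu>1 0 u0) (\<lambda>_. 0) undefined \<in> A" using h_in[OF _ U0 m0] T0 by simp
  have "matnorm (Q 0 (Z u0) (\<mu>1 0 u0) (h 0 u0 (\<mu>1 0 u0) (\<lambda>_. 0) undefined)) \<le> Qmax"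
    using Qle[OF _ Uset_Z(2)[OF U0] m0 a0] T0 by simp
  then have Qmax0: "0 \<le> Qmax" using matnorm_nonneg[of "Q 0 (Z u0) (\<mu>1 0 u0) (h 0 u0 (\<mu>1 0 u0) (\<lambda>_. 0) undefined)"]
    by linarith
  have n1: "(1::nat) \<in> {1..n}" using n_pos by simp
  have T0': "(0::real) \<in> {0..T}" using T0 by simp
  have lammax0: "0 \<le> lammax"
    using lamle[OF n1 T0' m0] lam_pos[OF n1 T0' m0] by linarith
  have K10: "0 \<le> K1" unfolding K1_def using L_nonneg vmax0 by simp
  have K20: "0 \<le> K2" unfolding K2_def using L_nonneg vmax0 Qmax0 lammax0 by simp
  define dm where "dm = (SUP (t,u)\<in>TS n T. maxnorm (\<lambda>i. \<mu>1 t u i - \<mu>2 t u i))"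
  have dmb: "bdd_above ((\<lambda>(t,u). maxnorm (\<lambda>i. \<mu>1 t u i - \<mu>2 t u i)) ` TS n T)"
  proof (rule bdd_aboveI2[of _ _ 1])
    fix x assume x: "x \<in> TS n T"
    obtain t u where e: "x = (t,u)" by (cases x)
    show "(case x of (t, u) \<Rightarrow> maxnorm (\<lambda>i. \<mu>1 t u i - \<mu>2 t u i)) \<le> 1"
      using simplex_diff[OF mu1S mu2S, of t u t u] x e by simp
  qed
  have mule: "maxnorm (\<lambda>i. \<mu>1 t u i - \<mu>2 t u i) \<le> dm" if "(t,u) \<in> TS n T" for t u
    using cSUP_upper[OF that dmb] unfolding dm_def by simp
  have dm0: "0 \<le> dm" using mule[OF TS0] maxnorm_nonneg order_trans by blast
  have level: "maxnorm (\<lambda>i. v1 t u i - v2 t u i) \<le> (L_Psi*dm + (K1*dm + lammax*B)*T) * exp(K2*T)"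
    if U: "u \<in> Uset n T" and B: "0 \<le> B"
      and pb: "\<And>t'. (t',u) \<in> TS n T \<Longrightarrow> Z u < n \<Longrightarrow> maxnorm (\<lambda>i. v1 t' (push u t') i - v2 t' (push u t') i) \<le> B"
      and tu: "(t,u) \<in> TS n T" for u B t
  proof -
    have ts: "tstart u \<le> T" using tstart_le[OF U T0] .
    define f where "f = (\<lambda>s i. v1 s u i - v2 s u i)"
    note R1 = v1[unfolded regular_solution_def, rule_format, OF U]
    note R2 = v2[unfolded regular_solution_def, rule_format, OF U]
    have acf: "abs_cont_on (tstart u) T f" unfolding f_def by (rule ac_diff[OF R1[THEN conjunct1] R2[THEN conjunct1]])
    note AE1 = R1[THEN conjunct2, THEN conjunct1]
    note AE2 = R2[THEN conjunct2, THEN conjunct1]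
    define \<alpha> where "\<alpha> = K1*dm + lammax*B"
    have al0: "0 \<le> \<alpha>" unfolding \<alpha>_def using K10 dm0 lammax0 B by simp
    have der: "AE s in lborel. s \<in> {tstart u..T} \<longrightarrow> (\<forall>i. \<exists>D. ((\<lambda>s. f s i) has_real_derivative D) (at s within {tstart u..T})
                 \<and> \<bar>D\<bar> \<le> \<alpha> + K2 * maxnorm (f s))"
      using AE1 AE2
    proof eventually_elim
      case (elim s)
      show ?case
      proof (intro impI allI)
        fix i assume s: "s \<in> {tstart u..T}"
        have sTS: "(s,u) \<in> TS n T" using TS_iff U s by auto
        have s0T: "s \<in> {0..T}" using s tstart_ge(1)[of u] by auto
        have m1: "\<mu>1 s u \<in> prob_simplex" and m2: "\<mu>2 s u \<in> prob_simplex" using mu1S mu2S sTS by auto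
        have Jeq: "J s (\<mu>2 s u) = J s (\<mu>1 s u)" using cond_v[OF s0T m2 m1] .
        define D1 where "D1 = - psi s (Z u) (\<mu>1 s u) (h s u (\<mu>1 s u) (v1 s u) i) i
                - (\<Sum>j\<in>UNIV. Q s (Z u) (\<mu>1 s u) (h s u (\<mu>1 s u) (v1 s u) i) i j * v1 s u j)
                - (if Z u < n then lam (Z u + 1) s (\<mu>1 s u)
                     * (v1 s (push u s) (J s (\<mu>1 s u) i) - v1 s u i) else 0)"
        define D2 where "D2 = - psi s (Z u) (\<mu>2 s u) (h s u (\<mu>2 s u) (v2 s u) i) i
                - (\<Sum>j\<in>UNIV. Q s (Z u) (\<mu>2 s u) (h s u (\<mu>2 s u) (v2 s u) i) i j * v2 s u j)
                - (if Z u < n then lam (Z u + 1) s (\<mu>2 s u)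
                     * (v2 s (push u s) (J s (\<mu>1 s u) i) - v2 s u i) else 0)"
        have d1: "((\<lambda>s. v1 s u i) has_real_derivative D1) (at s within {tstart u..T})"
          using elim(1) s unfolding D1_def by blast
        have d2: "((\<lambda>s. v2 s u i) has_real_derivative D2) (at s within {tstart u..T})"
          using elim(2) s unfolding D2_def Jeq[symmetric] by blast
        have d: "((\<lambda>s. f s i) has_real_derivative D1 - D2) (at s within {tstart u..T})"
          unfolding f_def by (rule DERIV_diff[OF d1 d2])
        have bnd: "\<bar>D1 - D2\<bar> \<le> (L_psih + L_Qh * vmax + 2 * vmax * L_lam)*dm + lammax*B + (L_psih + vmax * L_Qh + Qmax + lammax)*maxnorm (f s)"
          unfolding D1_def D2_def
        proof (rule pointwise[where Lp = L_psih and Lq = L_Qh and Ll = L_lam and V = vmax and dmu = "maxnorm (\<lambda>i. \<mu>1 s u i - \<mu>2 s u i)"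
              and psA = "\<lambda>i. psi s (Z u) (\<mu>1 s u) (h s u (\<mu>1 s u) (v1 s u) i) i"
              and psB = "\<lambda>i. psi s (Z u) (\<mu>2 s u) (h s u (\<mu>2 s u) (v2 s u) i) i"
              and QA = "\<lambda>i j. Q s (Z u) (\<mu>1 s u) (h s u (\<mu>1 s u) (v1 s u) i) i j"
              and QB = "\<lambda>i j. Q s (Z u) (\<mu>2 s u) (h s u (\<mu>2 s u) (v2 s u) i) i j"
              and xA = "v1 s u" and xB = "v2 s u" and yA = "v1 s (push u s)" and yB = "v2 s (push u s)"
              and J = "J s (\<mu>1 s u)" and b = "Z u < n" and lA = "lam (Z u + 1) s (\<mu>1 s u)"
              and lB = "lam (Z u + 1) s (\<mu>2 s u)" and dx = "maxnorm (f s)" and B = B and lm = lammax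
              and Qm = Qmax and dm = dm])
          show "maxnorm (\<lambda>i. psi s (Z u) (\<mu>1 s u) (h s u (\<mu>1 s u) (v1 s u) i) i - psi s (Z u) (\<mu>2 s u) (h s u (\<mu>2 s u) (v2 s u) i) i)
              \<le> L_psih * (maxnorm (\<lambda>i. \<mu>1 s u i - \<mu>2 s u i) + maxnorm (f s))"
            using cond_i[OF s0T U m1 m2] unfolding f_def .
          show "matnorm (\<lambda>i j. Q s (Z u) (\<mu>1 s u) (h s u (\<mu>1 s u) (v1 s u) i) i j - Q s (Z u) (\<mu>2 s u) (h s u (\<mu>2 s u) (v2 s u) i) i j)
              \<le> L_Qh * (maxnorm (\<lambda>i. \<mu>1 s u i - \<mu>2 s u i) + maxnorm (f s))"
            using cond_ii[OF s0T U m1 m2] unfolding f_def .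
          show "matnorm (\<lambda>i j. Q s (Z u) (\<mu>2 s u) (h s u (\<mu>2 s u) (v2 s u) i) i j) \<le> Qmax"
          proof (rule matnorm_le)
            fix i
            have "(\<Sum>j\<in>UNIV. \<bar>Q s (Z u) (\<mu>2 s u) (h s u (\<mu>2 s u) (v2 s u) i) i j\<bar>)
                \<le> matnorm (Q s (Z u) (\<mu>2 s u) (h s u (\<mu>2 s u) (v2 s u) i))" by (rule matnorm_ge)
            also have "\<dots> \<le> Qmax" using Qle[OF s0T Uset_Z(2)[OF U] m2 h_in[OF s0T U m2]] .
            finally show "(\<Sum>j\<in>UNIV. \<bar>Q s (Z u) (\<mu>2 s u) (h s u (\<mu>2 s u) (v2 s u) i) i j\<bar>) \<le> Qmax" .
          qed
          show "maxnorm (v1 s u) \<le> vmax" using v1b[OF sTS] .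
          show "maxnorm (v1 s (push u s)) \<le> vmax" if "Z u < n" using v1b push_TS(1)[OF sTS that] by blast
          show "maxnorm (f s) = maxnorm (\<lambda>i. v1 s u i - v2 s u i)" unfolding f_def ..
          show "\<bar>lam (Z u + 1) s (\<mu>1 s u) - lam (Z u + 1) s (\<mu>2 s u)\<bar> \<le> L_lam * maxnorm (\<lambda>i. \<mu>1 s u i - \<mu>2 s u i)"
            if "Z u < n" using cond_iv[OF _ s0T m1 m2] that by simp
          show "0 \<le> lam (Z u + 1) s (\<mu>2 s u)" if "Z u < n" using lam_pos[OF _ s0T m2] that by (simp add: less_imp_le)
          show "lam (Z u + 1) s (\<mu>2 s u) \<le> lammax" if "Z u < n" using lamle[OF _ s0T m2] that by simp
          show "maxnorm (\<lambda>i. v1 s (push u s) i - v2 s (push u s) i) \<le> B" if "Z u < n" using pb[OF sTS that] .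
          show "0 \<le> lammax" by (rule lammax0)
          show "maxnorm (\<lambda>i. \<mu>1 s u i - \<mu>2 s u i) \<le> dm" using mule[OF sTS] .
          show "0 \<le> L_psih" "0 \<le> L_Qh" "0 \<le> L_lam" using L_nonneg by auto
          show "0 \<le> maxnorm (\<lambda>i. \<mu>1 s u i - \<mu>2 s u i)" by (rule maxnorm_nonneg)
          show "0 \<le> B" by (rule B)
        qed
        then have "\<bar>D1 - D2\<bar> \<le> \<alpha> + K2 * maxnorm (f s)" unfolding \<alpha>_def K1_def K2_def by (simp add: algebra_simps)
        then show "\<exists>D. ((\<lambda>s. f s i) has_real_derivative D) (at s within {tstart u..T}) \<and> \<bar>D\<bar> \<le> \<alpha> + K2 * maxnorm (f s)"
          using d by blast
      qed
    qed
    have TTS: "(T,u) \<in> TS n T" using TS_iff U ts by auto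
    have fT: "maxnorm (f T) \<le> L_Psi * dm"
    proof -
      have "f T = (\<lambda>i. Psi (Z u) (\<mu>1 T u) i - Psi (Z u) (\<mu>2 T u) i)" unfolding f_def using R1[THEN conjunct2, THEN conjunct2] R2[THEN conjunct2, THEN conjunct2] by simp
      then have "maxnorm (f T) \<le> L_Psi * maxnorm (\<lambda>i. \<mu>1 T u i - \<mu>2 T u i)"
        using cond_iii[OF Uset_Z(2)[OF U] mu1S[OF TTS] mu2S[OF TTS]] by simp
      also have "\<dots> \<le> L_Psi * dm" using mule[OF TTS] L_nonneg by (intro mult_left_mono) auto
      finally show ?thesis .
    qed
    have tin: "t \<in> {tstart u..T}" using tu TS_iff by auto
    have c0: "0 \<le> L_Psi * dm" using L_nonneg dm0 by simp
    have g: "maxnorm (f t) \<le> (L_Psi * dm + \<alpha>*(T-t)) * exp(K2*(T-t))"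
      by (rule gronwall_back[OF ts acf der fT al0 K20 c0 tin])
    have t0: "0 \<le> t" using tin tstart_ge(1)[of u] by auto
    have "(L_Psi * dm + \<alpha>*(T-t)) * exp(K2*(T-t)) \<le> (L_Psi * dm + \<alpha>*T) * exp(K2*T)"
    proof (rule mult_mono)
      show "L_Psi * dm + \<alpha>*(T-t) \<le> L_Psi * dm + \<alpha>*T" using al0 t0 by (simp add: mult_left_mono)
      show "exp(K2*(T-t)) \<le> exp(K2*T)" using K20 t0 by (simp add: mult_left_mono)
      show "0 \<le> L_Psi * dm + \<alpha>*T" using c0 al0 T0 by simp
    qed simp
    then show ?thesis using g unfolding f_def \<alpha>_def by simp
  qed
  define C where "C = (L_Psi + K1 * T) * exp (K2 * T)"
  define r where "r = exp (K2 * T) * lammax * T"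
  define Bn where "Bn j = C * dm * (\<Sum>i\<le>j. r^i)" for j :: nat
  have r0: "0 \<le> r" unfolding r_def using lammax0 T0 by simp
  have C0: "0 \<le> C" unfolding C_def using L_nonneg K10 T0 by simp
  have Bn0: "0 \<le> Bn j" for j unfolding Bn_def using C0 dm0 r0 by (simp add: sum_nonneg)
  have Bnmono: "Bn j \<le> Bn (Suc j)" for j
    unfolding Bn_def using C0 dm0 r0 by (intro mult_left_mono) auto
  have Bnrec: "(L_Psi*dm + (K1*dm + lammax*Bn j)*T) * exp(K2*T) = Bn (Suc j)" for j
  proof -
    have "(\<Sum>i\<le>Suc j. r^i) = r^0 + (\<Sum>i\<le>j. r^(Suc i))" by (rule sum.atMost_Suc_shift)
    then have "(\<Sum>i\<le>Suc j. r^i) = 1 + r * (\<Sum>i\<le>j. r^i)"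
      by (simp add: sum_distrib_left del: sum.atMost_Suc)
    then show ?thesis unfolding Bn_def C_def r_def by (simp add: algebra_simps)
  qed
  have main: "\<forall>t u. (t,u) \<in> TS n T \<longrightarrow> n \<le> Z u + j \<longrightarrow> maxnorm (\<lambda>i. v1 t u i - v2 t u i) \<le> Bn j" for j
  proof (induction j)
    case 0
    show ?case
    proof (intro allI impI)
      fix t u assume tu: "(t,u) \<in> TS n T" and nz: "n \<le> Z u + 0"
      have U: "u \<in> Uset n T" using tu unfolding TS_def by auto
      have "maxnorm (\<lambda>i. v1 t u i - v2 t u i) \<le> (L_Psi*dm + (K1*dm + lammax*0)*T) * exp(K2*T)"
        by (rule level[OF U order_refl _ tu]) (use nz in simp)
      then show "maxnorm (\<lambda>i. v1 t u i - v2 t u i) \<le> Bn 0" unfolding Bn_def C_def by (simp add: algebra_simps)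
    qed
  next
    case (Suc j)
    show ?case
    proof (intro allI impI)
      fix t u assume tu: "(t,u) \<in> TS n T" and nz: "n \<le> Z u + Suc j"
      have U: "u \<in> Uset n T" using tu unfolding TS_def by auto
      show "maxnorm (\<lambda>i. v1 t u i - v2 t u i) \<le> Bn (Suc j)"
      proof (cases "n \<le> Z u + j")
        case True
        then show ?thesis using Suc.IH tu Bnmono[of j] by force
      next
        case False
        have "maxnorm (\<lambda>i. v1 t u i - v2 t u i) \<le> (L_Psi*dm + (K1*dm + lammax*Bn j)*T) * exp(K2*T)"
        proof (rule level[OF U Bn0 _ tu])
          fix t' assume t'u: "(t',u) \<in> TS n T" and Zn: "Z u < n"
          have "(t', push u t') \<in> TS n T" "Z (push u t') = Z u + 1" using push_TS[OF t'u Zn] by auto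
          moreover have "n \<le> Z (push u t') + j" using calculation(2) nz by simp
          ultimately show "maxnorm (\<lambda>i. v1 t' (push u t') i - v2 t' (push u t') i) \<le> Bn j" using Suc.IH by blast
        qed
        then show ?thesis using Bnrec by simp
      qed
    qed
  qed
  have all: "maxnorm (\<lambda>i. v1 t u i - v2 t u i) \<le> Bn n" if "(t,u) \<in> TS n T" for t u
    using main[of n] that by simp
  have "(SUP (t,u)\<in>TS n T. maxnorm (\<lambda>i. v1 t u i - v2 t u i)) \<le> Bn n"
    by (rule cSUP_least) (use TS0 all in auto)
  also have "Bn n = (L_Psi + K1 * T) * exp (K2 * T) * (\<Sum>i\<le>n. (exp (K2 * T) * lammax * T) ^ i) * dm"
    unfolding Bn_def C_def r_def by (simp add: ac_simps)
  finally show ?thesis unfolding dm_def .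
qed

end
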